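(* Let $X\in\{\pm1\}$ be a binary random variable with mean $\mu\in[-1,1]$, let $Y$ be an observation of $X$ through a BMS channel with capacity $C$, and let $U$ be another observation on the same probability space such that $U-X-Y$ forms a Markov chain. Then $$\mathrm{BER}(X\mid Y,U)\ge\mathrm{BER}(X\mid Y)-\sqrt{\frac{\ln(2)(1-C)\big(1-\mathrm{mmse}(X\mid U)\big)}{2}}.$$
   Context: BMS channel: input $\{\pm1\}$, output in $\overline{\mathbb{R}}$, transition density with $w(y\mid+1)=w(-y\mid-1)$; its capacity is $I(X_{\mathrm u};Y_{\mathrm u})$ for uniform input $X_{\mathrm u}$. $\mathrm{BER}(X\mid V)=\Pr(X\neq\phi(V))$ with $\phi$ the MAP decision rule for $X$ given $V$; $\mathrm{mmse}(X\mid V)=\mathbb{E}[(X-\mathbb{E}[X\mid V])^2]$. *)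

theory Defs
  imports "HOL-Probability.Probability"
begin

text \<open>Inputs are encoded as the reals -1 and 1.  A BMS channel is a Markov kernel
  W from the input alphabet to probability measures on the extended reals (Borel),
  satisfying the symmetry w(y|+1) = w(-y|-1), i.e. W(-1) is the image of W(+1)
  under negation.\<close>

definition bms_channel :: "(real \<Rightarrow> ereal measure) \<Rightarrow> bool" where
  "bms_channel W \<longleftrightarrow>
     prob_space (W 1) \<and> sets (W 1) = sets (borel :: ereal measure) \<and>
     W (-1) = distr (W 1) borel uminus"

definition uniform_input_joint :: "(real \<Rightarrow> ereal measure) \<Rightarrow> (real \<times> ereal) measure" where
  "uniform_input_joint W =
     bind (uniform_count_measure {-1, 1 :: real})
          (\<lambda>x. distr (W x) (borel \<Otimes>\<^sub>M borel) (\<lambda>y. (x, y)))"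

definition bms_capacity :: "(real \<Rightarrow> ereal measure) \<Rightarrow> real" where
  "bms_capacity W =
     prob_space.mutual_information (uniform_input_joint W) 2 borel borel fst snd"

definition gen_sigma :: "'a measure \<Rightarrow> ('a \<Rightarrow> 'b) \<Rightarrow> 'b measure \<Rightarrow> 'a measure" where
  "gen_sigma M V N = vimage_algebra (space M) V N"

text \<open>MAP decision for a \<plusminus>1-valued X given the sigma-algebra F: choose the value
  with the larger posterior, i.e. sign of E[X | F] (ties broken towards +1).\<close>

definition map_decision :: "'a measure \<Rightarrow> 'a measure \<Rightarrow> ('a \<Rightarrow> real) \<Rightarrow> 'a \<Rightarrow> real" where
  "map_decision M F X = (\<lambda>\<omega>. if real_cond_exp M F X \<omega> \<ge> 0 then 1 else -1)"

definition BER :: "'a measure \<Rightarrow> 'a measure \<Rightarrow> ('a \<Rightarrow> real) \<Rightarrow> real" where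
  "BER M F X = measure M {\<omega> \<in> space M. X \<omega> \<noteq> map_decision M F X \<omega>}"

definition mmse :: "'a measure \<Rightarrow> 'a measure \<Rightarrow> ('a \<Rightarrow> real) \<Rightarrow> real" where
  "mmse M F X = (\<integral>\<omega>. (X \<omega> - real_cond_exp M F X \<omega>)\<^sup>2 \<partial>M)"

end

theory Submission
  imports Defs
begin
definition Hn :: "real \<Rightarrow> real" where
  "Hn t = - t * ln t - (1 - t) * ln (1 - t)"

lemma scalar_half:
  fixes t :: real assumes "0 \<le> t" "t \<le> 1/2"
  shows "2 * t^2 \<le> Hn t"
proof -
  have a: "t^2 \<le> - t * ln t"
  proof (cases "t = 0")
    case False
    then have "ln t \<le> t - 1" using assms by (intro ln_le_minus_one) auto
    then have "t * ln t \<le> t * (t - 1)" using assms by (intro mult_left_mono) auto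
    moreover have "t * (2 * t) \<le> t * 1" using assms by (intro mult_left_mono) auto
    ultimately show ?thesis by (simp add: power2_eq_square algebra_simps)
  qed simp
  have "ln (1 - t) \<le> (1 - t) - 1" using assms by (intro ln_le_minus_one) auto
  then have "(1 - t) * ln (1 - t) \<le> (1 - t) * (- t)" using assms by (intro mult_left_mono) auto
  moreover have "t * (2 * t) \<le> t * 1" using assms by (intro mult_left_mono) auto
  ultimately have b: "t^2 \<le> - ((1 - t) * ln (1 - t))"
    by (simp add: power2_eq_square algebra_simps)
  show ?thesis using a b unfolding Hn_def by simp
qed

lemma scalar_main:
  fixes t :: real assumes "0 \<le> t" "t \<le> 1"
  shows "2 * (min t (1 - t))^2 \<le> Hn t"
proof (cases "t \<le> 1/2")
  case True then show ?thesis using scalar_half[of t] assms by (simp add: min_def)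
next
  case False
  have "Hn t = Hn (1 - t)" unfolding Hn_def by (simp add: algebra_simps)
  then show ?thesis using scalar_half[of "1 - t"] assms False by (simp add: min_def)
qed

lemma nn_integral_uc: "(\<integral>\<^sup>+x. g x \<partial>uniform_count_measure {-1, 1::real}) = (g (-1) + g 1) / 2"
  unfolding uniform_count_measure_def
  by (simp add: nn_integral_point_measure_finite ennreal_divide_times add_divide_distrib
       divide_ennreal_def algebra_simps)

lemma bms_facts:
  assumes "bms_channel W"
  shows "prob_space (W 1)" "sets (W 1) = sets borel" "prob_space (W (-1))"
    "sets (W (-1)) = sets borel" "space (W 1) = UNIV" "space (W (-1)) = UNIV"
    "\<And>A. A \<in> sets borel \<Longrightarrow> emeasure (W (-1)) A = emeasure (W 1) (uminus -` A)"
proof -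
  have a: "prob_space (W 1)" "sets (W 1) = sets borel" "W (-1) = distr (W 1) borel uminus"
    using assms unfolding bms_channel_def by auto
  have m: "uminus \<in> measurable (W 1) (borel :: ereal measure)"
    using a(2) by (simp add: measurable_cong_sets[OF a(2) refl])
  show "prob_space (W 1)" "sets (W 1) = sets borel" by fact+
  show "prob_space (W (-1))" unfolding a(3) by (rule prob_space.prob_space_distr[OF a(1) m])
  show "sets (W (-1)) = sets borel" unfolding a(3) by simp
  show "space (W 1) = UNIV" using sets_eq_imp_space_eq[OF a(2)] by simp
  show "space (W (-1)) = UNIV" unfolding a(3) by simp
  fix A :: "ereal set" assume "A \<in> sets borel"
  then show "emeasure (W (-1)) A = emeasure (W 1) (uminus -` A)"
    unfolding a(3) using m sets_eq_imp_space_eq[OF a(2)] by (simp add: emeasure_distr)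
qed

lemma J_facts:
  assumes bms: "bms_channel W"
  shows "sets (uniform_input_joint W) = sets (borel \<Otimes>\<^sub>M borel)"
    "\<And>S. S \<in> sets (borel \<Otimes>\<^sub>M borel) \<Longrightarrow> emeasure (uniform_input_joint W) S
        = (emeasure (W (-1)) (Pair (-1) -` S) + emeasure (W 1) (Pair 1 -` S)) / 2"
    "\<And>f. f \<in> borel_measurable (borel \<Otimes>\<^sub>M borel) \<Longrightarrow>
        (\<integral>\<^sup>+z. f z \<partial>uniform_input_joint W)
        = ((\<integral>\<^sup>+y. f (-1, y) \<partial>W (-1)) + (\<integral>\<^sup>+y. f (1, y) \<partial>W 1)) / 2"
    "prob_space (uniform_input_joint W)"
proof -
  note bf = bms_facts[OF bms]
  define K where "K = (\<lambda>x. distr (W x) (borel \<Otimes>\<^sub>M borel :: (real \<times> ereal) measure) (\<lambda>y. (x, y)))"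
  have Wx: "prob_space (W x)" "sets (W x) = sets borel" "space (W x) = UNIV" if "x \<in> {-1, 1}" for x
    using that bf by auto
  have mx: "(\<lambda>y. (x, y)) \<in> measurable (W x) (borel \<Otimes>\<^sub>M borel)" if "x \<in> {-1, 1}" for x
    using Wx[OF that] by (simp add: measurable_cong_sets[OF Wx(2)[OF that] refl])
  have Kp: "prob_space (K x)" "sets (K x) = sets (borel \<Otimes>\<^sub>M borel)" if "x \<in> {-1, 1}" for x
    unfolding K_def using prob_space.prob_space_distr[OF Wx(1)[OF that] mx[OF that]] by auto
  have Km: "K \<in> measurable (uniform_count_measure {-1, 1::real}) (subprob_algebra (borel \<Otimes>\<^sub>M borel))"
    unfolding measurable_cong_sets[OF sets_uniform_count_measure_count_space refl]
    using Kp by (auto simp: space_subprob_algebra prob_space_imp_subprob_space)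
  have J: "uniform_input_joint W = uniform_count_measure {-1, 1} \<bind> K"
    unfolding uniform_input_joint_def K_def by simp
  have ne: "space (uniform_count_measure {-1, 1::real}) \<noteq> {}"
    by (simp add: space_uniform_count_measure)
  show sJ: "sets (uniform_input_joint W) = sets (borel \<Otimes>\<^sub>M borel)"
    unfolding J by (rule sets_bind[OF _ ne]) (auto simp: space_uniform_count_measure Kp)
  show eJ: "emeasure (uniform_input_joint W) S
        = (emeasure (W (-1)) (Pair (-1) -` S) + emeasure (W 1) (Pair 1 -` S)) / 2"
    if S: "S \<in> sets (borel \<Otimes>\<^sub>M borel)" for S
  proof -
    have kk: "emeasure (K x) S = emeasure (W x) (Pair x -` S)" if "x \<in> {-1, 1}" for x
      unfolding K_def using S mx[OF that] Wx[OF that] by (simp add: emeasure_distr vimage_def)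
    have "emeasure (uniform_input_joint W) S = (\<integral>\<^sup>+x. emeasure (K x) S \<partial>uniform_count_measure {-1, 1})"
      unfolding J by (rule emeasure_bind[OF ne Km S])
    also have "\<dots> = (emeasure (K (-1)) S + emeasure (K 1) S) / 2" by (rule nn_integral_uc)
    finally show ?thesis using kk[of "-1"] kk[of 1] by simp
  qed
  show "(\<integral>\<^sup>+z. f z \<partial>uniform_input_joint W)
        = ((\<integral>\<^sup>+y. f (-1, y) \<partial>W (-1)) + (\<integral>\<^sup>+y. f (1, y) \<partial>W 1)) / 2"
    if f: "f \<in> borel_measurable (borel \<Otimes>\<^sub>M borel)" for f
  proof -
    have kk: "(\<integral>\<^sup>+z. f z \<partial>K x) = (\<integral>\<^sup>+y. f (x, y) \<partial>W x)" if "x \<in> {-1, 1}" for x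
      unfolding K_def using f mx[OF that] by (simp add: nn_integral_distr)
    have "(\<integral>\<^sup>+z. f z \<partial>uniform_input_joint W) = (\<integral>\<^sup>+x. \<integral>\<^sup>+z. f z \<partial>K x \<partial>uniform_count_measure {-1, 1})"
      unfolding J by (rule nn_integral_bind[OF f Km])
    also have "\<dots> = ((\<integral>\<^sup>+z. f z \<partial>K (-1)) + (\<integral>\<^sup>+z. f z \<partial>K 1)) / 2" by (rule nn_integral_uc)
    finally show ?thesis using kk[of "-1"] kk[of 1] by simp
  qed
  show "prob_space (uniform_input_joint W)"
  proof
    have "space (uniform_input_joint W) = UNIV" using sets_eq_imp_space_eq[OF sJ] by (simp add: space_pair_measure)
    then show "emeasure (uniform_input_joint W) (space (uniform_input_joint W)) = 1"
    proof -
      have "emeasure (W x) UNIV = 1" if "x \<in> {-1, 1}" for x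
        using prob_space.emeasure_space_1[OF Wx(1)[OF that]] Wx(3)[OF that] by simp
      moreover have "UNIV \<in> sets (borel \<Otimes>\<^sub>M borel :: (real \<times> ereal) measure)"
        by (metis sets.top space_borel space_pair_measure UNIV_Times_UNIV)
      ultimately have "emeasure (uniform_input_joint W) UNIV = (1 + 1) / 2" using eJ[of UNIV] by simp
      then show ?thesis using \<open>space (uniform_input_joint W) = UNIV\<close>
        by (simp add: one_add_one ennreal_divide_self)
    qed
  qed
qed

definition nuW :: "(real \<Rightarrow> ereal measure) \<Rightarrow> ereal measure" where
  "nuW W = distr (uniform_input_joint W) borel snd"

lemma nu_facts:
  assumes bms: "bms_channel W"
  shows "prob_space (nuW W)" "sets (nuW W) = sets borel" "space (nuW W) = UNIV"
    "\<And>B. B \<in> sets borel \<Longrightarrow> emeasure (nuW W) B = (emeasure (W (-1)) B + emeasure (W 1) B) / 2"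
    "\<And>g. g \<in> borel_measurable borel \<Longrightarrow> (\<integral>\<^sup>+y. g y \<partial>nuW W)
       = ((\<integral>\<^sup>+y. g y \<partial>W (-1)) + (\<integral>\<^sup>+y. g y \<partial>W 1)) / 2"
proof -
  note JF = J_facts[OF bms]
  have sn: "snd \<in> measurable (uniform_input_joint W) (borel :: ereal measure)"
    by (subst measurable_cong_sets[OF JF(1) refl]) simp
  have spJ: "space (uniform_input_joint W) = UNIV"
    using sets_eq_imp_space_eq[OF JF(1)] by (simp add: space_pair_measure)
  show "prob_space (nuW W)" unfolding nuW_def by (rule prob_space.prob_space_distr[OF JF(4) sn])
  show "sets (nuW W) = sets borel" unfolding nuW_def by simp
  then show "space (nuW W) = UNIV" using sets_eq_imp_space_eq by fastforce
  show "emeasure (nuW W) B = (emeasure (W (-1)) B + emeasure (W 1) B) / 2" if B: "B \<in> sets borel" for B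
  proof -
    have "snd -` B \<inter> space (uniform_input_joint W) \<in> sets (borel \<Otimes>\<^sub>M borel)"
      using measurable_sets[OF sn B] JF(1) by simp
    moreover have "Pair x -` (snd -` B \<inter> space (uniform_input_joint W)) = B" for x :: real
      using spJ by auto
    ultimately show ?thesis unfolding nuW_def using B sn JF(2) by (simp add: emeasure_distr)
  qed
  show "(\<integral>\<^sup>+y. g y \<partial>nuW W) = ((\<integral>\<^sup>+y. g y \<partial>W (-1)) + (\<integral>\<^sup>+y. g y \<partial>W 1)) / 2"
    if g: "g \<in> borel_measurable borel" for g
  proof -
    have "(\<integral>\<^sup>+y. g y \<partial>nuW W) = (\<integral>\<^sup>+z. g (snd z) \<partial>uniform_input_joint W)"
      unfolding nuW_def using g sn by (simp add: nn_integral_distr)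
    also have "\<dots> = ((\<integral>\<^sup>+y. g y \<partial>W (-1)) + (\<integral>\<^sup>+y. g y \<partial>W 1)) / 2"
      using JF(3)[of "\<lambda>z. g (snd z)"] g by simp
    finally show ?thesis .
  qed
qed

lemma half2: "2 * ((x + y) / 2) = (x + y :: ennreal)"
  by (simp only: ennreal_times_divide mult.commute[of 2]) (rule ennreal_mult_divide_eq; simp)

lemma chan_decomp:
  assumes bms: "bms_channel W"
  obtains t where "t \<in> borel_measurable borel" "\<And>y. 0 \<le> t y" "\<And>y. t y \<le> 1"
    "W 1 = density (nuW W) (\<lambda>y. ennreal (2 * t y))"
    "W (-1) = density (nuW W) (\<lambda>y. ennreal (2 * (1 - t y)))"
proof -
  note bf = bms_facts[OF bms]
  note nf = nu_facts[OF bms]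
  let ?nu = "nuW W"
  interpret nu: prob_space ?nu by (rule nf(1))
  have ac: "absolutely_continuous ?nu (W x)" if "x \<in> {-1, 1}" for x
  proof -
    have "emeasure (W x) A = 0" if "A \<in> sets borel" "emeasure ?nu A = 0" for A
      using that nf(4)[of A] \<open>x \<in> {-1, 1}\<close> by (auto simp: ennreal_divide_eq_0_iff)
    then show ?thesis unfolding absolutely_continuous_def null_sets_def
      using nf(2) bf that by auto
  qed
  define f1 where "f1 = RN_deriv ?nu (W 1)"
  define fm where "fm = RN_deriv ?nu (W (-1))"
  have d1: "density ?nu f1 = W 1" unfolding f1_def
    by (rule nu.density_RN_deriv[OF ac]) (use bf nf in auto)
  have dm: "density ?nu fm = W (-1)" unfolding fm_def
    by (rule nu.density_RN_deriv[OF ac]) (use bf nf in auto)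
  have m1[measurable]: "f1 \<in> borel_measurable ?nu" and mm[measurable]: "fm \<in> borel_measurable ?nu"
    unfolding f1_def fm_def by auto
  have "density ?nu (\<lambda>y. f1 y + fm y) = density ?nu (\<lambda>_. 2)"
  proof (rule measure_eqI)
    show "sets (density ?nu (\<lambda>y. f1 y + fm y)) = sets (density ?nu (\<lambda>_. 2))" by simp
    fix A assume "A \<in> sets (density ?nu (\<lambda>y. f1 y + fm y))"
    then have A[measurable]: "A \<in> sets ?nu" by simp
    have "emeasure (density ?nu (\<lambda>y. f1 y + fm y)) A = (\<integral>\<^sup>+y. (f1 y + fm y) * indicator A y \<partial>?nu)"
      by (simp add: emeasure_density)
    also have "\<dots> = (\<integral>\<^sup>+y. f1 y * indicator A y \<partial>?nu) + (\<integral>\<^sup>+y. fm y * indicator A y \<partial>?nu)"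
      by (subst nn_integral_add[symmetric]) (auto simp: distrib_right)
    also have "\<dots> = emeasure (W 1) A + emeasure (W (-1)) A"
      using d1 dm by (simp add: emeasure_density[symmetric])
    also have "\<dots> = 2 * emeasure ?nu A" using nf(4)[of A] nf(2) A
      by (simp add: half2 add.commute)
    also have "\<dots> = emeasure (density ?nu (\<lambda>_. 2)) A"
      by (simp add: emeasure_density nn_integral_cmult)
    finally show "emeasure (density ?nu (\<lambda>y. f1 y + fm y)) A = emeasure (density ?nu (\<lambda>_. 2)) A" .
  qed
  then have ae2: "AE y in ?nu. f1 y + fm y = 2"
    by (subst (asm) nu.density_unique_iff) auto
  define t where "t y = min 1 (enn2real (f1 y) / 2)" for y
  have tm: "t \<in> borel_measurable borel" unfolding t_def
    using m1 by (simp add: measurable_cong_sets[OF nf(2) refl])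
  have ae1: "AE y in ?nu. f1 y = ennreal (2 * t y) \<and> fm y = ennreal (2 * (1 - t y))"
    using ae2
  proof eventually_elim
    case (elim y)
    obtain a where a: "f1 y = ennreal a" "0 \<le> a"
    proof (cases "f1 y" rule: ennreal_cases)
      case top then show ?thesis using elim by simp
    qed
    obtain b where b: "fm y = ennreal b" "0 \<le> b"
    proof (cases "fm y" rule: ennreal_cases)
      case top then show ?thesis using elim by simp
    qed
    have "ennreal (a + b) = ennreal 2" using elim a b by simp
    then have "a + b = 2" using a b by (subst (asm) ennreal_inj) auto
    then show ?case using a b unfolding t_def by (auto simp: min_def)
  qed
  show ?thesis
  proof
    show "t \<in> borel_measurable borel" by fact
    show "0 \<le> t y" "t y \<le> 1" for y unfolding t_def by auto
    show "W 1 = density ?nu (\<lambda>y. ennreal (2 * t y))"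
      unfolding d1[symmetric] using ae1 tm nf(2)
      by (intro density_cong) (auto simp: measurable_cong_sets[OF nf(2) refl])
    show "W (-1) = density ?nu (\<lambda>y. ennreal (2 * (1 - t y)))"
      unfolding dm[symmetric] using ae1 tm nf(2)
      by (intro density_cong) (auto simp: measurable_cong_sets[OF nf(2) refl])
  qed
qed

lemma rlogr_bound:
  fixes r :: real assumes "0 \<le> r" "r \<le> 2"
  shows "\<bar>r * log 2 r\<bar> \<le> 2 / ln 2"
proof (cases "r = 0")
  case False
  then have rp: "0 < r" using assms by simp
  have u: "r * ln r \<le> r * (r - 1)" using rp ln_le_minus_one[OF rp] by (intro mult_left_mono) auto
  have "ln (1 / r) \<le> 1 / r - 1" using rp by (intro ln_le_minus_one) auto
  then have "- ln r \<le> 1 / r - 1" using rp by (simp add: ln_div)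
  then have "r * (- ln r) \<le> r * (1 / r - 1)" using rp by (intro mult_left_mono) auto
  then have l: "- (r * ln r) \<le> 1 - r" using rp by (simp add: algebra_simps)
  have "r * (r - 1) \<le> r * 1" using assms by (intro mult_left_mono) auto
  then have "r * (r - 1) \<le> 2" using assms by linarith
  then have "\<bar>r * ln r\<bar> \<le> 2" using u l assms by linarith
  moreover have "r * log 2 r = r * ln r / ln 2" by (simp add: log_def)
  ultimately show ?thesis by (simp add: abs_div divide_right_mono)
qed simp

lemma uprime_eq:
  assumes bms: "bms_channel W"
  shows "distr (uniform_input_joint W) borel fst = distr (uniform_count_measure {-1, 1::real}) borel (\<lambda>x. x)"
proof (rule measure_eqI)
  note JF = J_facts[OF bms]
  note bf = bms_facts[OF bms]
  show "sets (distr (uniform_input_joint W) borel fst) = sets (distr (uniform_count_measure {-1, 1::real}) borel (\<lambda>x. x))"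
    by simp
  fix A :: "real set" assume "A \<in> sets (distr (uniform_input_joint W) borel fst)"
  then have A[measurable]: "A \<in> sets borel" by simp
  have fs: "fst \<in> measurable (uniform_input_joint W) (borel :: real measure)"
    by (subst measurable_cong_sets[OF JF(1) refl]) simp
  have "emeasure (distr (uniform_input_joint W) borel fst) A = (\<integral>\<^sup>+x. indicator A x \<partial>distr (uniform_input_joint W) borel fst)"
    by simp
  also have "\<dots> = (\<integral>\<^sup>+z. indicator A (fst z) \<partial>uniform_input_joint W)"
    by (rule nn_integral_distr[OF fs]) simp
  also have "\<dots> = ((\<integral>\<^sup>+y. indicator A (-1::real) \<partial>W (-1)) + (\<integral>\<^sup>+y. indicator A (1::real) \<partial>W 1)) / 2"
    by (subst JF(3)) auto
  also have "\<dots> = (indicator A (-1::real) + indicator A (1::real)) / 2"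
    using prob_space.emeasure_space_1[OF bf(1)] prob_space.emeasure_space_1[OF bf(3)] by simp
  also have "\<dots> = (\<integral>\<^sup>+x. indicator A x \<partial>uniform_count_measure {-1, 1::real})"
    by (simp add: nn_integral_uc)
  also have "\<dots> = (\<integral>\<^sup>+x. indicator A x \<partial>distr (uniform_count_measure {-1, 1::real}) borel (\<lambda>x. x))"
    by (subst nn_integral_distr) (auto simp: measurable_cong_sets[OF sets_uniform_count_measure_count_space refl])
  also have "\<dots> = emeasure (distr (uniform_count_measure {-1, 1::real}) borel (\<lambda>x. x)) A"
    by simp
  finally show "emeasure (distr (uniform_input_joint W) borel fst) A = emeasure (distr (uniform_count_measure {-1, 1::real}) borel (\<lambda>x. x)) A" .
qed

lemma capacity_formula:
  assumes bms: "bms_channel W" and tm[measurable]: "t \<in> borel_measurable borel"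
    and t0: "\<And>y. 0 \<le> t y" and t1: "\<And>y. t y \<le> 1"
    and W1: "W 1 = density (nuW W) (\<lambda>y. ennreal (2 * t y))"
    and Wm: "W (-1) = density (nuW W) (\<lambda>y. ennreal (2 * (1 - t y)))"
  shows "bms_capacity W = (\<integral>y. t y * log 2 (2 * t y) + (1 - t y) * log 2 (2 * (1 - t y)) \<partial>nuW W)"
proof -
  note JF = J_facts[OF bms]
  note nf = nu_facts[OF bms]
  define J where "J = uniform_input_joint W"
  define nu where "nu = nuW W"
  define u' where "u' = distr J borel fst"
  define r where "r z = (if fst z = (1::real) then 2 * t (snd z) else 2 * (1 - t (snd z)))" for z :: "real \<times> ereal"
  have sJ: "sets J = sets (borel \<Otimes>\<^sub>M borel)" unfolding J_def by (rule JF(1))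
  have fs: "fst \<in> measurable J (borel :: real measure)"
    by (subst measurable_cong_sets[OF sJ refl]) simp
  have u'p: "prob_space u'" unfolding u'_def J_def by (rule prob_space.prob_space_distr[OF JF(4)]) (use fs J_def in simp)
  have u'eq: "u' = distr (uniform_count_measure {-1, 1::real}) borel (\<lambda>x. x)"
    unfolding u'_def J_def by (rule uprime_eq[OF bms])
  have su': "sets u' = sets borel" unfolding u'_def by simp
  have snu: "sets nu = sets borel" unfolding nu_def by (rule nf(2))
  have nup: "prob_space nu" unfolding nu_def by (rule nf(1))
  interpret pp: pair_prob_space u' nu
    by (simp add: pair_prob_space_def pair_sigma_finite_def u'p nup prob_space_imp_sigma_finite)
  interpret nus: prob_space nu by (rule nup)
  let ?P = "u' \<Otimes>\<^sub>M nu"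
  have sP: "sets ?P = sets (borel \<Otimes>\<^sub>M borel)" by (rule sets_pair_measure_cong[OF su' snu])
  have rm[measurable]: "r \<in> borel_measurable (borel \<Otimes>\<^sub>M borel)" unfolding r_def by measurable
  have rP: "r \<in> borel_measurable ?P" by (subst measurable_cong_sets[OF sP refl]) (rule rm)
  have r02: "0 \<le> r z" "r z \<le> 2" for z unfolding r_def using t0 t1 by auto
  have Jd: "J = density ?P (\<lambda>z. ennreal (r z))"
  proof (rule measure_eqI)
    show "sets J = sets (density ?P (\<lambda>z. ennreal (r z)))" using sJ sP by simp
    fix S assume "S \<in> sets J"
    then have S: "S \<in> sets (borel \<Otimes>\<^sub>M borel)" using sJ by simp
    define H where "H x = (\<integral>\<^sup>+y. ennreal (r (x, y)) * indicator S (x, y) \<partial>nu)" for x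
    have sBn: "sets (borel \<Otimes>\<^sub>M nu) = sets (borel \<Otimes>\<^sub>M (borel :: ereal measure))"
      by (rule sets_pair_measure_cong[OF refl snu])
    have ee: "(\<lambda>(x, y). ennreal (r (x, y)) * indicator S (x, y)) = (\<lambda>z. ennreal (r z) * indicator S z)"
      by auto
    have Hm: "H \<in> borel_measurable borel" unfolding H_def
      by (rule pp.M2.borel_measurable_nn_integral)
         (subst measurable_cong_sets[OF sBn refl], unfold ee, use S in measurable)
    have Hx: "H x = emeasure (W x) (Pair x -` S)" if "x \<in> {-1, 1}" for x
    proof -
      have PS: "Pair x -` S \<in> sets borel" using S by (rule sets_Pair1)
      have "H x = (\<integral>\<^sup>+y. ennreal (r (x, y)) * indicator (Pair x -` S) y \<partial>nu)"
        unfolding H_def by (simp add: indicator_def)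
      also have "\<dots> = emeasure (W x) (Pair x -` S)"
      proof -
        from that consider "x = -1" | "x = 1" by auto
        then show ?thesis
        proof cases
          case 1
          have "emeasure (W (-1)) (Pair x -` S) = emeasure (density nu (\<lambda>y. ennreal (2 * (1 - t y)))) (Pair x -` S)"
            using Wm nu_def by simp
          also have "\<dots> = (\<integral>\<^sup>+y. ennreal (2 * (1 - t y)) * indicator (Pair x -` S) y \<partial>nu)"
            using PS snu by (subst emeasure_density) (auto simp: measurable_cong_sets[OF snu refl])
          finally show ?thesis using 1 by (simp add: r_def)
        next
          case 2
          have "emeasure (W 1) (Pair x -` S) = emeasure (density nu (\<lambda>y. ennreal (2 * t y))) (Pair x -` S)"
            using W1 nu_def by simp
          also have "\<dots> = (\<integral>\<^sup>+y. ennreal (2 * t y) * indicator (Pair x -` S) y \<partial>nu)"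
            using PS snu by (subst emeasure_density) (auto simp: measurable_cong_sets[OF snu refl])
          finally show ?thesis using 2 by (simp add: r_def)
        qed
      qed
      finally show ?thesis .
    qed
    have "emeasure (density ?P (\<lambda>z. ennreal (r z))) S = (\<integral>\<^sup>+z. ennreal (r z) * indicator S z \<partial>?P)"
      using S sP rP by (subst emeasure_density) auto
    also have "\<dots> = (\<integral>\<^sup>+x. H x \<partial>u')" unfolding H_def
      by (rule pp.M2.nn_integral_fst[symmetric]) (subst measurable_cong_sets[OF sP refl], use S in measurable)
    also have "\<dots> = (\<integral>\<^sup>+x. H x \<partial>uniform_count_measure {-1, 1::real})"
      unfolding u'eq by (rule nn_integral_distr)
         (auto simp: Hm measurable_cong_sets[OF sets_uniform_count_measure_count_space refl])
    also have "\<dots> = (H (-1) + H 1) / 2" by (rule nn_integral_uc)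
    finally show "emeasure J S = emeasure (density ?P (\<lambda>z. ennreal (r z))) S"
      unfolding J_def using JF(2)[OF S] Hx[of "-1"] Hx[of 1] by simp
  qed
  have RN: "AE z in ?P. ennreal (r z) = RN_deriv ?P J z"
    using rP by (intro sigma_finite_measure.RN_deriv_unique[OF prob_space_imp_sigma_finite[OF pp.P.prob_space_axioms]])
      (auto simp: Jd)
  have RNJ: "AE z in J. enn2real (RN_deriv ?P J z) = r z"
  proof -
    have "AE z in ?P. 0 < ennreal (r z) \<longrightarrow> enn2real (RN_deriv ?P J z) = r z"
      using RN by eventually_elim (metis enn2real_ennreal r02(1))
    then have "AE z in density ?P (\<lambda>z. ennreal (r z)). enn2real (RN_deriv ?P J z) = r z"
      using rP by (subst AE_density) auto
    then show ?thesis by (simp only: Jd[symmetric])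
  qed
  have cap: "bms_capacity W = KL_divergence 2 ?P J"
  proof -
    have "distr J (borel \<Otimes>\<^sub>M borel) (\<lambda>x. (fst x, snd x)) = J"
      using distr_id2[of "borel \<Otimes>\<^sub>M borel" J] sJ by simp
    then show ?thesis
      unfolding bms_capacity_def J_def[symmetric] prob_space.mutual_information_def[OF JF(4)[folded J_def]]
        u'_def nu_def nuW_def by simp
  qed
  have RNm[measurable]: "RN_deriv ?P J \<in> borel_measurable (borel \<Otimes>\<^sub>M borel)"
    by (subst measurable_cong_sets[OF sP[symmetric] refl]) (rule borel_measurable_RN_deriv)
  have lm1: "(\<lambda>x. log 2 (enn2real (RN_deriv ?P J x))) \<in> borel_measurable J"
    by (subst measurable_cong_sets[OF sJ refl]) measurable
  have lm2: "(\<lambda>x. log 2 (r x)) \<in> borel_measurable J"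
    by (subst measurable_cong_sets[OF sJ refl]) measurable
  have "bms_capacity W = (\<integral>z. log 2 (r z) \<partial>J)"
    unfolding cap KL_divergence_def entropy_density_def o_def
    by (rule integral_cong_AE[OF lm1 lm2]) (use RNJ in auto)
  also have "\<dots> = (\<integral>z. r z * log 2 (r z) \<partial>?P)"
    apply (subst Jd) using rP r02 by (subst integral_density) auto
  also have "\<dots> = (\<integral>x. (\<integral>y. r (x, y) * log 2 (r (x, y)) \<partial>nu) \<partial>u')"
  proof (rule pp.integral_fst'[symmetric])
    show "integrable ?P (\<lambda>z. r z * log 2 (r z))"
      by (rule pp.P.integrable_const_bound[where B = "2 / ln 2"])
         (use rlogr_bound r02 rP in auto)
  qed
  also have "\<dots> = (\<integral>x. (\<integral>y. r (x, y) * log 2 (r (x, y)) \<partial>nu) \<partial>uniform_count_measure {-1, 1::real})"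
    unfolding u'eq
  proof (rule integral_distr)
    show "(\<lambda>x. x) \<in> measurable (uniform_count_measure {-1, 1::real}) borel"
      by (simp add: measurable_cong_sets[OF sets_uniform_count_measure_count_space refl])
    have sBn2: "sets (borel \<Otimes>\<^sub>M nu) = sets (borel \<Otimes>\<^sub>M (borel :: ereal measure))"
      by (rule sets_pair_measure_cong[OF refl snu])
    have ee: "(\<lambda>(x, y). r (x, y) * log 2 (r (x, y))) = (\<lambda>z. r z * log 2 (r z))" by auto
    show "(\<lambda>x. \<integral>y. r (x, y) * log 2 (r (x, y)) \<partial>nu) \<in> borel_measurable borel"
      by (rule pp.M2.borel_measurable_lebesgue_integral)
         (subst measurable_cong_sets[OF sBn2 refl], unfold ee, measurable)
  qed
  also have "\<dots> = ((\<integral>y. 2 * (1 - t y) * log 2 (2 * (1 - t y)) \<partial>nu) + (\<integral>y. 2 * t y * log 2 (2 * t y) \<partial>nu)) / 2"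
    by (subst integral_uniform_count_measure) (auto simp: r_def)
  also have "\<dots> = (\<integral>y. t y * log 2 (2 * t y) + (1 - t y) * log 2 (2 * (1 - t y)) \<partial>nu)"
  proof -
    have i1: "integrable nu (\<lambda>y. 2 * (1 - t y) * log 2 (2 * (1 - t y)))"
      by (rule pp.M2.integrable_const_bound[where B = "2 / ln 2"])
         (use rlogr_bound t0 t1 in \<open>auto simp: measurable_cong_sets[OF snu refl]\<close>)
    have i2: "integrable nu (\<lambda>y. 2 * t y * log 2 (2 * t y))"
      by (rule pp.M2.integrable_const_bound[where B = "2 / ln 2"])
         (use rlogr_bound t0 t1 in \<open>auto simp: measurable_cong_sets[OF snu refl]\<close>)
    have "(\<integral>y. t y * log 2 (2 * t y) + (1 - t y) * log 2 (2 * (1 - t y)) \<partial>nu)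
        = (\<integral>y. (2 * (1 - t y) * log 2 (2 * (1 - t y)) + 2 * t y * log 2 (2 * t y)) / 2 \<partial>nu)"
      by (rule Bochner_Integration.integral_cong) (auto simp: field_simps)
    also have "\<dots> = (\<integral>y. (2 * (1 - t y) * log 2 (2 * (1 - t y)) + 2 * t y * log 2 (2 * t y)) \<partial>nu) / 2"
      by simp
    also have "\<dots> = ((\<integral>y. 2 * (1 - t y) * log 2 (2 * (1 - t y)) \<partial>nu) + (\<integral>y. 2 * t y * log 2 (2 * t y) \<partial>nu)) / 2"
      using i1 i2 by simp
    finally show ?thesis by simp
  qed
  finally show ?thesis unfolding nu_def .
qed

lemma (in prob_space) sq_int_le:
  fixes X :: "'a \<Rightarrow> real"
  assumes "integrable M X" "integrable M (\<lambda>x. (X x)\<^sup>2)"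
  shows "(expectation X)\<^sup>2 \<le> expectation (\<lambda>x. (X x)\<^sup>2)"
proof -
  have "0 \<le> variance X" by simp
  then show ?thesis using variance_eq[OF assms] by simp
qed

lemma measure_density_real:
  assumes gm: "g \<in> borel_measurable M" and g0: "\<And>x. 0 \<le> g x" and A: "A \<in> sets M"
  shows "measure (density M (\<lambda>x. ennreal (g x))) A = (\<integral>x. g x * indicator A x \<partial>M)"
proof -
  have "measure (density M (\<lambda>x. ennreal (g x))) A = enn2real (\<integral>\<^sup>+x. ennreal (g x) * indicator A x \<partial>M)"
    unfolding measure_def using gm A by (simp add: emeasure_density)
  also have "\<dots> = (\<integral>x. g x * indicator A x \<partial>M)"
    by (rule enn2real_nn_integral_eq_integral) (use gm A g0 in \<open>auto simp: indicator_def\<close>)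
  finally show ?thesis .
qed

lemma cap_pt:
  fixes t :: real assumes "0 \<le> t" "t \<le> 1"
  shows "ln 2 * (1 - (t * log 2 (2 * t) + (1 - t) * log 2 (2 * (1 - t)))) = Hn t"
proof -
  have e: "x * log 2 (2 * x) = x + x * ln x / ln 2" if "0 \<le> x" for x :: real
  proof (cases "x = 0")
    case False
    then have "log 2 (2 * x) = 1 + log 2 x" using that by (simp add: log_mult)
    then show ?thesis by (simp add: log_def algebra_simps)
  qed simp
  have "1 - t \<ge> 0" using assms by simp
  show ?thesis unfolding e[OF assms(1)] e[OF \<open>1 - t \<ge> 0\<close>] Hn_def
    by (simp add: field_simps)
qed

lemma chan_final:
  assumes bms: "bms_channel W"
  obtains \<beta> where "0 \<le> \<beta>" "\<beta> \<le> sqrt (ln 2 * (1 - bms_capacity W) / 2)"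
    "\<And>D. D \<in> sets borel \<Longrightarrow> 2 * \<beta> \<le> measure (W 1) (UNIV - D) + measure (W (-1)) D"
    "\<exists>D0 \<in> sets borel. measure (W 1) D0 + measure (W (-1)) (UNIV - D0) = 2 * \<beta>"
proof -
  obtain t where tm[measurable]: "t \<in> borel_measurable borel" and t0: "\<And>y. 0 \<le> t y"
    and t1: "\<And>y. t y \<le> 1"
    and W1: "W 1 = density (nuW W) (\<lambda>y. ennreal (2 * t y))"
    and Wm: "W (-1) = density (nuW W) (\<lambda>y. ennreal (2 * (1 - t y)))"
    using chan_decomp[OF bms] by blast
  note nf = nu_facts[OF bms]
  define nu where "nu = nuW W"
  interpret nu: prob_space nu unfolding nu_def by (rule nf(1))
  have snu: "sets nu = sets borel" unfolding nu_def by (rule nf(2))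
  have tnu[measurable]: "t \<in> borel_measurable nu" by (simp add: measurable_cong_sets[OF snu refl])
  define q where "q y = min (t y) (1 - t y)" for y
  have qm[measurable]: "q \<in> borel_measurable nu" unfolding q_def by measurable
  define \<beta> where "\<beta> = (\<integral>y. q y \<partial>nu)"
  have q0: "0 \<le> q y" "q y \<le> 1" for y unfolding q_def using t0[of y] t1[of y] by auto
  have qi: "integrable nu q"
    by (rule nu.integrable_const_bound[where B = 1]) (use q0 in auto)
  have qi2: "integrable nu (\<lambda>y. (q y)\<^sup>2)"
    by (rule nu.integrable_const_bound[where B = 1]) (use q0 in \<open>auto simp: abs_le_square_iff power_le_one\<close>)
  have W1m: "measure (W 1) A = (\<integral>y. 2 * t y * indicator A y \<partial>nu)" if "A \<in> sets borel" for A
    unfolding W1 nu_def[symmetric] by (rule measure_density_real) (use t0 that snu in auto)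
  have Wmm: "measure (W (-1)) A = (\<integral>y. 2 * (1 - t y) * indicator A y \<partial>nu)" if "A \<in> sets borel" for A
    unfolding Wm nu_def[symmetric] by (rule measure_density_real) (use t1 that snu in auto)
  have ib: "integrable nu (\<lambda>y. c * f y * indicator A y)" if "A \<in> sets borel" "f \<in> borel_measurable nu"
    "\<And>y. \<bar>f y\<bar> \<le> 1" for A and c :: real and f
  proof (rule nu.integrable_const_bound[where B = "\<bar>c\<bar>"])
    show "AE y in nu. norm (c * f y * indicator A y) \<le> \<bar>c\<bar>"
    proof (rule AE_I2)
      fix y
      have "\<bar>c\<bar> * \<bar>f y\<bar> \<le> \<bar>c\<bar>" using that(3)[of y] by (intro mult_left_le) auto
      then show "norm (c * f y * indicator A y) \<le> \<bar>c\<bar>" by (auto simp: indicator_def abs_mult)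
    qed
    have [measurable]: "A \<in> sets nu" "f \<in> borel_measurable nu" using that snu by auto
    show "(\<lambda>y. c * f y * indicator A y) \<in> borel_measurable nu" by measurable
  qed
  define G where "G y = t y * log 2 (2 * t y) + (1 - t y) * log 2 (2 * (1 - t y))" for y
  have Gb: "\<bar>x * log 2 (2 * x)\<bar> \<le> 1 / ln 2" if "0 \<le> x" "x \<le> 1" for x :: real
  proof -
    have "\<bar>(2 * x) * log 2 (2 * x)\<bar> \<le> 2 / ln 2" using that by (intro rlogr_bound) auto
    then show ?thesis by (simp add: abs_mult)
  qed
  have Gi: "integrable nu G"
  proof (rule nu.integrable_const_bound[where B = "2 / ln 2"])
    show "AE y in nu. norm (G y) \<le> 2 / ln 2"
    proof (rule AE_I2)
      fix y
      have "\<bar>G y\<bar> \<le> \<bar>t y * log 2 (2 * t y)\<bar> + \<bar>(1 - t y) * log 2 (2 * (1 - t y))\<bar>"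
        unfolding G_def by (rule abs_triangle_ineq)
      also have "\<dots> \<le> 1 / ln 2 + 1 / ln 2" using Gb[of "t y"] Gb[of "1 - t y"] t0[of y] t1[of y] by (intro add_mono) auto
      finally show "norm (G y) \<le> 2 / ln 2" by simp
    qed
    show "G \<in> borel_measurable nu" unfolding G_def by measurable
  qed
  have capf: "bms_capacity W = (\<integral>y. G y \<partial>nu)"
    unfolding G_def nu_def by (rule capacity_formula[OF bms tm t0 t1 W1 Wm])
  have Hpt: "(\<lambda>y. Hn (t y) / 2) = (\<lambda>y. ln 2 * (1 - G y) / 2)"
    unfolding G_def using cap_pt[OF t0 t1] by simp
  show ?thesis
  proof
    show "0 \<le> \<beta>" unfolding \<beta>_def using q0 by simp
    have "\<beta>\<^sup>2 \<le> (\<integral>y. (q y)\<^sup>2 \<partial>nu)" unfolding \<beta>_def by (rule nu.sq_int_le[OF qi qi2])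
    also have "\<dots> \<le> (\<integral>y. Hn (t y) / 2 \<partial>nu)"
    proof (rule integral_mono[OF qi2])
      show "integrable nu (\<lambda>y. Hn (t y) / 2)"
      proof -
        have "integrable nu (\<lambda>x. 1 - G x)" by (rule Bochner_Integration.integrable_diff[OF _ Gi]) simp
        then show ?thesis unfolding Hpt by (intro integrable_divide integrable_mult_right)
      qed
      show "(q y)\<^sup>2 \<le> Hn (t y) / 2" for y using scalar_main[OF t0 t1, of y] unfolding q_def by simp
    qed
    also have "\<dots> = ln 2 * (1 - bms_capacity W) / 2"
      unfolding Hpt capf using Gi by (simp add: nu.prob_space)
    finally show "\<beta> \<le> sqrt (ln 2 * (1 - bms_capacity W) / 2)"
      using \<open>0 \<le> \<beta>\<close> by (simp add: real_le_rsqrt)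
    show "2 * \<beta> \<le> measure (W 1) (UNIV - D) + measure (W (-1)) D" if D: "D \<in> sets borel" for D
    proof -
      have D': "UNIV - D \<in> sets borel" using D by auto
      have i1: "integrable nu (\<lambda>y. 2 * t y * indicator (UNIV - D) y)"
        by (rule ib[OF D' tnu]) (use t0 t1 in \<open>auto simp: abs_le_iff\<close>)
      have i2: "integrable nu (\<lambda>y. 2 * (1 - t y) * indicator D y)"
        by (rule ib[OF D]) (use t0 t1 in \<open>auto simp: abs_le_iff\<close>)
      have "2 * \<beta> = (\<integral>y. 2 * q y \<partial>nu)" unfolding \<beta>_def by simp
      also have "\<dots> \<le> (\<integral>y. 2 * t y * indicator (UNIV - D) y + 2 * (1 - t y) * indicator D y \<partial>nu)"
      proof (rule integral_mono)
        show "integrable nu (\<lambda>y. 2 * q y)" using qi by simp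
        show "integrable nu (\<lambda>y. 2 * t y * indicator (UNIV - D) y + 2 * (1 - t y) * indicator D y)"
          using i1 i2 by simp
        show "2 * q y \<le> 2 * t y * indicator (UNIV - D) y + 2 * (1 - t y) * indicator D y" for y
          by (auto simp: q_def indicator_def min_def)
      qed
      also have "\<dots> = measure (W 1) (UNIV - D) + measure (W (-1)) D"
        using i1 i2 W1m[OF D'] Wmm[OF D] by simp
      finally show ?thesis .
    qed
    show "\<exists>D0 \<in> sets borel. measure (W 1) D0 + measure (W (-1)) (UNIV - D0) = 2 * \<beta>"
    proof (intro bexI)
      define D where "D = {y. t y < 1/2}"
      have "{y \<in> space borel. t y < 1/2} \<in> sets borel" by measurable
      then show D: "D \<in> sets borel" unfolding D_def by simp
      have D': "UNIV - D \<in> sets borel" using D by auto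
      have i1: "integrable nu (\<lambda>y. 2 * t y * indicator D y)"
        by (rule ib[OF D tnu]) (use t0 t1 in \<open>auto simp: abs_le_iff\<close>)
      have i2: "integrable nu (\<lambda>y. 2 * (1 - t y) * indicator (UNIV - D) y)"
        by (rule ib[OF D']) (use t0 t1 in \<open>auto simp: abs_le_iff\<close>)
      have "measure (W 1) D + measure (W (-1)) (UNIV - D)
          = (\<integral>y. 2 * t y * indicator D y + 2 * (1 - t y) * indicator (UNIV - D) y \<partial>nu)"
        using i1 i2 W1m[OF D] Wmm[OF D'] by simp
      also have "\<dots> = (\<integral>y. 2 * q y \<partial>nu)"
        by (rule Bochner_Integration.integral_cong) (auto simp: q_def D_def indicator_def)
      also have "\<dots> = 2 * \<beta>" unfolding \<beta>_def by simp
      finally show "measure (W 1) D + measure (W (-1)) (UNIV - D) = 2 * \<beta>" .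
    qed
  qed
qed

lemma gen_sigma_subalg:
  assumes "prob_space M" "V \<in> measurable M N'"
  shows "sigma_finite_subalgebra M (gen_sigma M V N')"
proof -
  have "finite_measure_subalgebra M (gen_sigma M V N')"
    unfolding finite_measure_subalgebra_def finite_measure_subalgebra_axioms_def subalgebra_def gen_sigma_def
    using sets_image_in_sets[OF refl assms(2)] assms(1) prob_space_def by auto
  then show ?thesis by (rule finite_measure_subalgebra_is_sigma_finite)
qed

lemma pm1_prod: "a \<in> {-1, 1} \<Longrightarrow> b \<in> {-1, 1::real} \<Longrightarrow> \<bar>a * b\<bar> \<le> 1"
  by auto

lemma pm1_err:
  fixes X Z :: "'a \<Rightarrow> real"
  assumes P: "prob_space M" and Xm: "X \<in> borel_measurable M" and Zm: "Z \<in> borel_measurable M"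
    and Xb: "\<And>\<omega>. \<omega> \<in> space M \<Longrightarrow> X \<omega> \<in> {-1, 1}" and Zb: "\<And>\<omega>. \<omega> \<in> space M \<Longrightarrow> Z \<omega> \<in> {-1, 1}"
  shows "measure M {\<omega> \<in> space M. X \<omega> \<noteq> Z \<omega>} = (1 - (\<integral>\<omega>. Z \<omega> * X \<omega> \<partial>M)) / 2"
proof -
  interpret prob_space M by (rule P)
  have [measurable]: "X \<in> borel_measurable M" "Z \<in> borel_measurable M" by fact+
  have i: "integrable M (\<lambda>\<omega>. Z \<omega> * X \<omega>)"
    by (rule integrable_const_bound[where B = 1]) (use Xb Zb pm1_prod in \<open>auto intro!: AE_I2\<close>)
  have "measure M {\<omega> \<in> space M. X \<omega> \<noteq> Z \<omega>} = (\<integral>\<omega>. indicator {\<omega> \<in> space M. X \<omega> \<noteq> Z \<omega>} \<omega> \<partial>M)"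
    by simp
  also have "\<dots> = (\<integral>\<omega>. (1 - Z \<omega> * X \<omega>) / 2 \<partial>M)"
    by (rule Bochner_Integration.integral_cong[OF refl]) (use Xb Zb in \<open>fastforce simp: indicator_def\<close>)
  also have "\<dots> = (1 - (\<integral>\<omega>. Z \<omega> * X \<omega> \<partial>M)) / 2"
    using i by (simp add: prob_space)
  finally show ?thesis .
qed

lemma BER_le:
  fixes X e :: "'a \<Rightarrow> real"
  assumes P: "prob_space M" and F: "sigma_finite_subalgebra M F"
    and Xm: "X \<in> borel_measurable M" and Xb: "\<And>\<omega>. \<omega> \<in> space M \<Longrightarrow> X \<omega> \<in> {-1, 1}"
    and em: "e \<in> borel_measurable F" and eb: "\<And>\<omega>. \<omega> \<in> space M \<Longrightarrow> e \<omega> \<in> {-1, 1}"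
  shows "BER M F X \<le> measure M {\<omega> \<in> space M. X \<omega> \<noteq> e \<omega>}"
proof -
  interpret prob_space M by (rule P)
  interpret F: sigma_finite_subalgebra M F by (rule F)
  define c where "c = real_cond_exp M F X"
  define d where "d = map_decision M F X"
  have cF[measurable]: "c \<in> borel_measurable F" unfolding c_def by simp
  have dF: "d \<in> borel_measurable F" unfolding d_def map_decision_def c_def[symmetric] by measurable
  have dM: "d \<in> borel_measurable M" by (rule measurable_from_subalg[OF F.subalg dF])
  have eM: "e \<in> borel_measurable M" by (rule measurable_from_subalg[OF F.subalg em])
  have db: "d \<omega> \<in> {-1, 1}" for \<omega> unfolding d_def map_decision_def by auto
  have ie: "integrable M (\<lambda>\<omega>. e \<omega> * X \<omega>)"
    by (rule integrable_const_bound[where B = 1]) (use Xb eb Xm eM pm1_prod in \<open>auto intro!: AE_I2\<close>)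
  have id: "integrable M (\<lambda>\<omega>. d \<omega> * X \<omega>)"
    by (rule integrable_const_bound[where B = 1]) (use Xb db Xm dM pm1_prod in \<open>auto intro!: AE_I2\<close>)
  note ce = F.real_cond_exp_intg[OF ie em Xm, folded c_def]
  note cd = F.real_cond_exp_intg[OF id dF Xm, folded c_def]
  have "(\<integral>\<omega>. e \<omega> * c \<omega> \<partial>M) \<le> (\<integral>\<omega>. d \<omega> * c \<omega> \<partial>M)"
  proof (rule integral_mono[OF ce(1) cd(1)])
    fix \<omega> assume "\<omega> \<in> space M"
    then have "e \<omega> \<in> {-1, 1}" by (rule eb)
    then show "e \<omega> * c \<omega> \<le> d \<omega> * c \<omega>"
      unfolding d_def map_decision_def c_def[symmetric] by auto
  qed
  then have "(\<integral>\<omega>. e \<omega> * X \<omega> \<partial>M) \<le> (\<integral>\<omega>. d \<omega> * X \<omega> \<partial>M)" using ce(2) cd(2) by simp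
  moreover have "BER M F X = (1 - (\<integral>\<omega>. d \<omega> * X \<omega> \<partial>M)) / 2"
    unfolding BER_def d_def[symmetric] by (rule pm1_err[OF P Xm dM Xb]) (use db in auto)
  moreover have "measure M {\<omega> \<in> space M. X \<omega> \<noteq> e \<omega>} = (1 - (\<integral>\<omega>. e \<omega> * X \<omega> \<partial>M)) / 2"
    by (rule pm1_err[OF P Xm eM Xb eb])
  ultimately show ?thesis by simp
qed

lemma kernel_formula:
  fixes M :: "'a measure" and X :: "'a \<Rightarrow> real" and Y :: "'a \<Rightarrow> ereal" and U :: "'a \<Rightarrow> 'b"
    and N :: "'b measure" and Wx :: "ereal measure"
  assumes P: "prob_space M" and Xm[measurable]: "X \<in> borel_measurable M"
    and Ym[measurable]: "Y \<in> borel_measurable M" and Um[measurable]: "U \<in> measurable M N"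
    and Wp: "prob_space Wx" and Ws: "sets Wx = sets borel"
    and ch: "\<And>B. B \<in> sets borel \<Longrightarrow>
        measure M {\<omega> \<in> space M. X \<omega> = x \<and> Y \<omega> \<in> B}
          = measure M {\<omega> \<in> space M. X \<omega> = x} * measure Wx B"
    and mk: "\<And>A B. A \<in> sets N \<Longrightarrow> B \<in> sets borel \<Longrightarrow>
        measure M {\<omega> \<in> space M. X \<omega> = x \<and> U \<omega> \<in> A \<and> Y \<omega> \<in> B}
          * measure M {\<omega> \<in> space M. X \<omega> = x}
        = measure M {\<omega> \<in> space M. X \<omega> = x \<and> U \<omega> \<in> A}
          * measure M {\<omega> \<in> space M. X \<omega> = x \<and> Y \<omega> \<in> B}"
    and S: "S \<in> sets (borel \<Otimes>\<^sub>M N)"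
  shows "emeasure M {\<omega> \<in> space M. X \<omega> = x \<and> (Y \<omega>, U \<omega>) \<in> S}
    = (\<integral>\<^sup>+\<omega>. indicator {\<omega> \<in> space M. X \<omega> = x} \<omega> * emeasure Wx {y. (y, U \<omega>) \<in> S} \<partial>M)"
proof -
  interpret M: prob_space M by (rule P)
  interpret Wx: prob_space Wx by (rule Wp)
  define Ex where "Ex = {\<omega> \<in> space M. X \<omega> = x}"
  have Ex[measurable]: "Ex \<in> sets M" unfolding Ex_def by measurable
  define R where "R = density M (indicator Ex)"
  have sR: "sets R = sets M" "space R = space M" unfolding R_def by auto
  have spW: "space Wx = UNIV" using sets_eq_imp_space_eq[OF Ws] by simp
  have eR: "emeasure R A = emeasure M (Ex \<inter> A)" if "A \<in> sets M" for A
    unfolding R_def using that by (rule emeasure_restricted[OF Ex])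
  let ?f1 = "\<lambda>\<omega>. (Y \<omega>, U \<omega>)"
  let ?f2 = "\<lambda>(\<omega>, y). (y, U \<omega>)"
  have f1m: "?f1 \<in> measurable R (borel \<Otimes>\<^sub>M N)"
    by (subst measurable_cong_sets[OF sR(1) refl]) measurable
  have f2m: "?f2 \<in> measurable (R \<Otimes>\<^sub>M Wx) (borel \<Otimes>\<^sub>M N)"
  proof -
    have sRW: "sets (R \<Otimes>\<^sub>M Wx) = sets (M \<Otimes>\<^sub>M borel)" by (rule sets_pair_measure_cong[OF sR(1) Ws])
    show ?thesis by (subst measurable_cong_sets[OF sRW refl]) measurable
  qed
  define \<mu>1 where "\<mu>1 = distr R (borel \<Otimes>\<^sub>M N) ?f1"
  define \<mu>2 where "\<mu>2 = distr (R \<Otimes>\<^sub>M Wx) (borel \<Otimes>\<^sub>M N) ?f2"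
  let ?\<Omega> = "space (borel :: ereal measure) \<times> space N"
  let ?E = "{a \<times> b | a b. a \<in> sets (borel :: ereal measure) \<and> b \<in> sets N}"
  have rect: "measure M {\<omega> \<in> space M. X \<omega> = x \<and> U \<omega> \<in> A \<and> Y \<omega> \<in> B}
      = measure M {\<omega> \<in> space M. X \<omega> = x \<and> U \<omega> \<in> A} * measure Wx B"
    if A: "A \<in> sets N" and B: "B \<in> sets borel" for A B
  proof (cases "measure M Ex = 0")
    case True
    have "measure M {\<omega> \<in> space M. X \<omega> = x \<and> U \<omega> \<in> A \<and> Y \<omega> \<in> B} \<le> measure M Ex"
      by (rule M.finite_measure_mono) (auto simp: Ex_def)
    moreover have "measure M {\<omega> \<in> space M. X \<omega> = x \<and> U \<omega> \<in> A} \<le> measure M Ex"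
      by (rule M.finite_measure_mono) (auto simp: Ex_def)
    ultimately show ?thesis using True
        measure_nonneg[of M "{\<omega> \<in> space M. X \<omega> = x \<and> U \<omega> \<in> A \<and> Y \<omega> \<in> B}"]
        measure_nonneg[of M "{\<omega> \<in> space M. X \<omega> = x \<and> U \<omega> \<in> A}"] by simp
  next
    case False
    have "measure M {\<omega> \<in> space M. X \<omega> = x \<and> U \<omega> \<in> A \<and> Y \<omega> \<in> B} * measure M Ex
        = (measure M {\<omega> \<in> space M. X \<omega> = x \<and> U \<omega> \<in> A} * measure Wx B) * measure M Ex"
      using mk[OF A B] ch[OF B] unfolding Ex_def by (simp add: ac_simps)
    then show ?thesis using False by simp
  qed
  have "\<mu>1 = \<mu>2"
  proof (rule measure_eqI_generator_eq[where \<Omega> = ?\<Omega> and E = ?E and A = "\<lambda>_. ?\<Omega>"])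
    show "Int_stable ?E" by (rule Int_stable_pair_measure_generator)
    show "?E \<subseteq> Pow ?\<Omega>"
    proof
      fix z assume "z \<in> ?E"
      then obtain a b where "z = a \<times> b" "a \<in> sets (borel :: ereal measure)" "b \<in> sets N" by blast
      then show "z \<in> Pow ?\<Omega>" using sets.sets_into_space[of b N] by auto
    qed
    show "sets \<mu>1 = sigma_sets ?\<Omega> ?E" unfolding \<mu>1_def by (simp add: sets_pair_measure)
    show "sets \<mu>2 = sigma_sets ?\<Omega> ?E" unfolding \<mu>2_def by (simp add: sets_pair_measure)
    have "?\<Omega> \<in> ?E" using sets.top[of "borel :: ereal measure"] sets.top[of N] by blast
    then show "range (\<lambda>_. ?\<Omega>) \<subseteq> ?E" by auto
    show "(\<Union>i::nat. ?\<Omega>) = ?\<Omega>" by simp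
    have "emeasure \<mu>1 ?\<Omega> \<le> emeasure R (space R)" unfolding \<mu>1_def
      by (subst emeasure_distr[OF f1m]) (auto intro!: emeasure_mono simp: space_pair_measure)
    also have "\<dots> = emeasure M (Ex \<inter> space M)" using eR sR by simp
    also have "\<dots> \<le> 1" by (rule M.emeasure_le_1)
    finally show "emeasure \<mu>1 ?\<Omega> \<noteq> \<infinity>" for i :: nat by (auto simp: top_unique)
    fix Z assume "Z \<in> ?E"
    then obtain B A where Z: "Z = B \<times> A" and B: "B \<in> sets borel" and A: "A \<in> sets N" by blast
    have "emeasure \<mu>1 Z = emeasure R (?f1 -` Z \<inter> space R)"
      unfolding \<mu>1_def using Z A B by (subst emeasure_distr[OF f1m]) auto
    also have "?f1 -` Z \<inter> space R = {\<omega> \<in> space M. Y \<omega> \<in> B \<and> U \<omega> \<in> A}" using Z sR by auto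
    also have "emeasure R {\<omega> \<in> space M. Y \<omega> \<in> B \<and> U \<omega> \<in> A}
        = emeasure M {\<omega> \<in> space M. X \<omega> = x \<and> U \<omega> \<in> A \<and> Y \<omega> \<in> B}"
      using A B by (subst eR) (auto simp: Ex_def intro!: arg_cong[where f = "emeasure M"])
    also have "\<dots> = ennreal (measure M {\<omega> \<in> space M. X \<omega> = x \<and> U \<omega> \<in> A} * measure Wx B)"
      by (simp add: M.emeasure_eq_measure rect[OF A B])
    also have "\<dots> = emeasure M {\<omega> \<in> space M. X \<omega> = x \<and> U \<omega> \<in> A} * emeasure Wx B"
      by (simp add: M.emeasure_eq_measure Wx.emeasure_eq_measure ennreal_mult)
    also have "\<dots> = emeasure R {\<omega> \<in> space M. U \<omega> \<in> A} * emeasure Wx B"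
    proof -
      have "Ex \<inter> {\<omega> \<in> space M. U \<omega> \<in> A} = {\<omega> \<in> space M. X \<omega> = x \<and> U \<omega> \<in> A}"
        unfolding Ex_def by auto
      moreover have "{\<omega> \<in> space M. U \<omega> \<in> A} \<in> sets M" using A by measurable
      ultimately show ?thesis using eR by simp
    qed
    also have "\<dots> = emeasure (R \<Otimes>\<^sub>M Wx) ({\<omega> \<in> space M. U \<omega> \<in> A} \<times> B)"
      using A B sR Ws by (subst Wx.emeasure_pair_measure_Times) auto
    also have "{\<omega> \<in> space M. U \<omega> \<in> A} \<times> B = ?f2 -` Z \<inter> space (R \<Otimes>\<^sub>M Wx)"
      using Z sR spW by (auto simp: space_pair_measure)
    also have "emeasure (R \<Otimes>\<^sub>M Wx) \<dots> = emeasure \<mu>2 Z"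
      unfolding \<mu>2_def using Z A B by (subst emeasure_distr[OF f2m]) auto
    finally show "emeasure \<mu>1 Z = emeasure \<mu>2 Z" .
  qed
  define Q where "Q = ?f2 -` S \<inter> space (R \<Otimes>\<^sub>M Wx)"
  have Q: "Q \<in> sets (R \<Otimes>\<^sub>M Wx)" unfolding Q_def by (rule measurable_sets[OF f2m S])
  have slice: "Pair \<omega> -` Q = {y. (y, U \<omega>) \<in> S}" if "\<omega> \<in> space M" for \<omega>
    using that sR spW by (auto simp: Q_def space_pair_measure)
  have gm: "(\<lambda>\<omega>. emeasure Wx (Pair \<omega> -` Q)) \<in> borel_measurable R"
    by (rule Wx.measurable_emeasure_Pair[OF Q])
  have "emeasure M {\<omega> \<in> space M. X \<omega> = x \<and> (Y \<omega>, U \<omega>) \<in> S} = emeasure R (?f1 -` S \<inter> space R)"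
    using S sR by (subst eR) (auto simp: Ex_def intro!: arg_cong[where f = "emeasure M"])
  also have "\<dots> = emeasure \<mu>1 S" unfolding \<mu>1_def using S by (subst emeasure_distr[OF f1m]) auto
  also have "\<dots> = emeasure \<mu>2 S" using \<open>\<mu>1 = \<mu>2\<close> by simp
  also have "\<dots> = emeasure (R \<Otimes>\<^sub>M Wx) Q" unfolding \<mu>2_def Q_def using S by (subst emeasure_distr[OF f2m]) auto
  also have "\<dots> = (\<integral>\<^sup>+\<omega>. emeasure Wx (Pair \<omega> -` Q) \<partial>R)" by (rule Wx.emeasure_pair_measure_alt[OF Q])
  also have "\<dots> = (\<integral>\<^sup>+\<omega>. indicator Ex \<omega> * emeasure Wx (Pair \<omega> -` Q) \<partial>M)"
  proof -
    have gm': "(\<lambda>\<omega>. emeasure Wx (Pair \<omega> -` Q)) \<in> borel_measurable M"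
      using gm by (simp only: measurable_cong_sets[OF sR(1) refl])
    show ?thesis unfolding R_def by (rule nn_integral_density[OF _ gm']) simp
  qed
  also have "\<dots> = (\<integral>\<^sup>+\<omega>. indicator Ex \<omega> * emeasure Wx {y. (y, U \<omega>) \<in> S} \<partial>M)"
    by (rule nn_integral_cong) (simp add: slice)
  finally show ?thesis unfolding Ex_def .
qed

lemma BER_Y_upper:
  fixes M :: "'a measure" and X :: "'a \<Rightarrow> real" and Y :: "'a \<Rightarrow> ereal"
  assumes P: "prob_space M" and Xm[measurable]: "X \<in> borel_measurable M"
    and Xb: "\<And>\<omega>. \<omega> \<in> space M \<Longrightarrow> X \<omega> \<in> {-1, 1}"
    and Ym[measurable]: "Y \<in> borel_measurable M"
    and bms: "bms_channel W"
    and channel: "\<And>x B. x \<in> {-1, 1} \<Longrightarrow> B \<in> sets borel \<Longrightarrow>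
        measure M {\<omega> \<in> space M. X \<omega> = x \<and> Y \<omega> \<in> B}
          = measure M {\<omega> \<in> space M. X \<omega> = x} * measure (W x) B"
    and D0: "D0 \<in> sets borel" and D0eq: "measure (W 1) D0 + measure (W (-1)) (UNIV - D0) = 2 * \<beta>"
  shows "BER M (gen_sigma M Y borel) X \<le> \<beta>"
proof -
  interpret M: prob_space M by (rule P)
  note bf = bms_facts[OF bms]
  define FY where "FY = gen_sigma M Y borel"
  have subY: "sigma_finite_subalgebra M FY" unfolding FY_def by (rule gen_sigma_subalg[OF P Ym])
  have YF: "Y \<in> measurable FY borel" unfolding FY_def gen_sigma_def
    by (rule measurable_vimage_algebra1) (use measurable_space[OF Ym] in auto)
  define p1 where "p1 = measure M {\<omega> \<in> space M. X \<omega> = 1}"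
  define pm where "pm = measure M {\<omega> \<in> space M. X \<omega> = -1}"
  have psum: "p1 + pm = 1"
  proof -
    have "p1 + pm = measure M ({\<omega> \<in> space M. X \<omega> = 1} \<union> {\<omega> \<in> space M. X \<omega> = -1})"
      unfolding p1_def pm_def by (subst M.finite_measure_Union) auto
    also have "{\<omega> \<in> space M. X \<omega> = 1} \<union> {\<omega> \<in> space M. X \<omega> = -1} = space M" using Xb by auto
    finally show ?thesis by (simp add: M.prob_space)
  qed
  have err: "BER M FY X \<le> p1 * measure (W 1) D + pm * measure (W (-1)) (UNIV - D)"
    if D: "D \<in> sets borel" for D
  proof -
    define e where "e \<omega> = (if Y \<omega> \<in> D then -1 else (1::real))" for \<omega>
    have eF: "e \<in> borel_measurable FY" unfolding e_def using YF D by measurable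
    have "BER M FY X \<le> measure M {\<omega> \<in> space M. X \<omega> \<noteq> e \<omega>}"
      by (rule BER_le[OF P subY Xm Xb eF]) (auto simp: e_def)
    also have "{\<omega> \<in> space M. X \<omega> \<noteq> e \<omega>} = {\<omega> \<in> space M. X \<omega> = 1 \<and> Y \<omega> \<in> D} \<union> {\<omega> \<in> space M. X \<omega> = -1 \<and> Y \<omega> \<in> UNIV - D}"
      using Xb by (auto simp: e_def)
    also have "measure M \<dots> = measure M {\<omega> \<in> space M. X \<omega> = 1 \<and> Y \<omega> \<in> D} + measure M {\<omega> \<in> space M. X \<omega> = -1 \<and> Y \<omega> \<in> UNIV - D}"
      using D by (subst M.finite_measure_Union) auto
    also have "\<dots> = p1 * measure (W 1) D + pm * measure (W (-1)) (UNIV - D)"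
    proof -
      have c1: "measure M {\<omega> \<in> space M. X \<omega> = 1 \<and> Y \<omega> \<in> D} = p1 * measure (W 1) D"
        unfolding p1_def by (rule channel) (use D in auto)
      have cm: "measure M {\<omega> \<in> space M. X \<omega> = -1 \<and> Y \<omega> \<in> UNIV - D} = pm * measure (W (-1)) (UNIV - D)"
        unfolding pm_def by (rule channel) (use D in auto)
      show ?thesis unfolding c1 cm ..
    qed
    finally show ?thesis .
  qed
  define D1 where "D1 = uminus -` (UNIV - D0)"
  have D1: "D1 \<in> sets borel"
  proof -
    have um: "(\<lambda>y. - y :: ereal) \<in> borel_measurable borel" by measurable
    have "UNIV - D0 \<in> sets borel" using D0 by auto
    from measurable_sets[OF um this] show ?thesis unfolding D1_def by (simp add: vimage_def)
  qed
  have s1: "measure (W 1) D1 = measure (W (-1)) (UNIV - D0)"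
    unfolding measure_def D1_def using bf(7)[of "UNIV - D0"] D0 by auto
  have s2: "measure (W (-1)) (UNIV - D1) = measure (W 1) D0"
  proof -
    have "uminus -` (UNIV - D1) = D0" unfolding D1_def by auto
    then show ?thesis unfolding measure_def using bf(7)[of "UNIV - D1"] D1 by auto
  qed
  have e0: "BER M FY X \<le> p1 * measure (W 1) D0 + pm * measure (W (-1)) (UNIV - D0)" by (rule err[OF D0])
  have e1: "BER M FY X \<le> p1 * measure (W (-1)) (UNIV - D0) + pm * measure (W 1) D0"
    using err[OF D1] s1 s2 by simp
  have "2 * BER M FY X \<le> (p1 + pm) * (measure (W 1) D0 + measure (W (-1)) (UNIV - D0))"
    using add_mono[OF e0 e1] by (simp add: algebra_simps)
  then show ?thesis using psum D0eq unfolding FY_def by simp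
qed

lemma slice_meas:
  fixes Wx :: "ereal measure" and U :: "'a \<Rightarrow> 'b"
  assumes Wp: "prob_space Wx" and Ws: "sets Wx = sets borel" and Um: "U \<in> measurable M N"
    and S: "S \<in> sets (borel \<Otimes>\<^sub>M N)"
  shows "(\<lambda>\<omega>. measure Wx {y. (y, U \<omega>) \<in> S}) \<in> borel_measurable (gen_sigma M U N)"
proof -
  interpret Wx: prob_space Wx by (rule Wp)
  define F where "F = gen_sigma M U N"
  have UF[measurable]: "U \<in> measurable F N" unfolding F_def gen_sigma_def
    by (rule measurable_vimage_algebra1) (use measurable_space[OF Um] in auto)
  have spF: "space F = space M" unfolding F_def gen_sigma_def by simp
  have spW: "space Wx = UNIV" using sets_eq_imp_space_eq[OF Ws] by simp
  have fm: "(\<lambda>(\<omega>, y). (y, U \<omega>)) \<in> measurable (F \<Otimes>\<^sub>M Wx) (borel \<Otimes>\<^sub>M N)"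
  proof -
    have sFW: "sets (F \<Otimes>\<^sub>M Wx) = sets (F \<Otimes>\<^sub>M borel)" by (rule sets_pair_measure_cong[OF refl Ws])
    show ?thesis by (subst measurable_cong_sets[OF sFW refl]) measurable
  qed
  define Q where "Q = (\<lambda>(\<omega>, y). (y, U \<omega>)) -` S \<inter> space (F \<Otimes>\<^sub>M Wx)"
  have Q: "Q \<in> sets (F \<Otimes>\<^sub>M Wx)" unfolding Q_def by (rule measurable_sets[OF fm S])
  have "(\<lambda>\<omega>. emeasure Wx (Pair \<omega> -` Q)) \<in> borel_measurable F"
    by (rule Wx.measurable_emeasure_Pair[OF Q])
  then have "(\<lambda>\<omega>. enn2real (emeasure Wx (Pair \<omega> -` Q))) \<in> borel_measurable F" by measurable
  moreover have "Pair \<omega> -` Q = {y. (y, U \<omega>) \<in> S}" if "\<omega> \<in> space F" for \<omega>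
    using that spW by (auto simp: Q_def space_pair_measure)
  ultimately show ?thesis unfolding F_def[symmetric] measure_def
    by (subst measurable_cong[where g = "\<lambda>\<omega>. enn2real (emeasure Wx (Pair \<omega> -` Q))"]) auto
qed

lemma mmse_bound:
  fixes M :: "'a measure" and X :: "'a \<Rightarrow> real" and U :: "'a \<Rightarrow> 'b"
  assumes P: "prob_space M" and Xm[measurable]: "X \<in> borel_measurable M"
    and Xb: "\<And>\<omega>. \<omega> \<in> space M \<Longrightarrow> X \<omega> \<in> {-1, 1}"
    and Um: "U \<in> measurable M N"
  shows "(\<integral>\<omega>. \<bar>real_cond_exp M (gen_sigma M U N) X \<omega>\<bar> \<partial>M) \<le> sqrt (1 - mmse M (gen_sigma M U N) X)"
    and "AE \<omega> in M. \<bar>real_cond_exp M (gen_sigma M U N) X \<omega>\<bar> \<le> 1"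
proof -
  interpret M: prob_space M by (rule P)
  have Xb': "\<bar>X \<omega>\<bar> \<le> 1 \<and> X \<omega> \<le> 1 \<and> -1 \<le> X \<omega>" if "\<omega> \<in> space M" for \<omega>
    using Xb[OF that] by auto
  define F where "F = gen_sigma M U N"
  interpret F: sigma_finite_subalgebra M F unfolding F_def by (rule gen_sigma_subalg[OF P Um])
  define c where "c = real_cond_exp M F X"
  have cF[measurable]: "c \<in> borel_measurable F" unfolding c_def by simp
  have cM[measurable]: "c \<in> borel_measurable M" unfolding c_def by simp
  have Xi: "integrable M X"
    by (rule M.integrable_const_bound[where B = 1]) (use Xb' in \<open>auto intro!: AE_I2\<close>)
  have "AE \<omega> in M. c \<omega> \<le> 1" unfolding c_def
    by (rule F.real_cond_exp_le_c[OF Xi]) (use Xb' in \<open>auto intro!: AE_I2\<close>)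
  moreover have "AE \<omega> in M. c \<omega> \<ge> -1" unfolding c_def
    by (rule F.real_cond_exp_ge_c[OF Xi]) (use Xb' in \<open>auto intro!: AE_I2\<close>)
  ultimately have cb: "AE \<omega> in M. \<bar>c \<omega>\<bar> \<le> 1" by eventually_elim auto
  then show "AE \<omega> in M. \<bar>real_cond_exp M (gen_sigma M U N) X \<omega>\<bar> \<le> 1" unfolding c_def F_def .
  have ci2: "integrable M (\<lambda>\<omega>. (c \<omega>)\<^sup>2)"
    by (rule M.integrable_const_bound[where B = 1]) (use cb in \<open>auto simp: abs_square_le_1\<close>)
  have cai: "integrable M (\<lambda>\<omega>. \<bar>c \<omega>\<bar>)"
    by (rule M.integrable_const_bound[where B = 1]) (use cb in auto)
  have cXb: "AE \<omega> in M. norm (c \<omega> * X \<omega>) \<le> 1"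
    using cb AE_space
  proof eventually_elim
    case (elim \<omega>)
    have "\<bar>c \<omega>\<bar> * \<bar>X \<omega>\<bar> \<le> 1" using elim Xb'[of \<omega>] by (intro mult_le_one) auto
    then show ?case by (simp add: abs_mult)
  qed
  have cXi: "integrable M (\<lambda>\<omega>. c \<omega> * X \<omega>)"
    by (rule M.integrable_const_bound[OF cXb]) simp
  have cc: "(\<integral>\<omega>. c \<omega> * c \<omega> \<partial>M) = (\<integral>\<omega>. c \<omega> * X \<omega> \<partial>M)"
    using F.real_cond_exp_intg(2)[OF cXi cF Xm] unfolding c_def by simp
  have mm: "mmse M F X = 1 - (\<integral>\<omega>. (c \<omega>)\<^sup>2 \<partial>M)"
  proof -
    have "mmse M F X = (\<integral>\<omega>. 1 - 2 * (c \<omega> * X \<omega>) + (c \<omega>)\<^sup>2 \<partial>M)"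
      unfolding mmse_def c_def[symmetric]
    proof (rule Bochner_Integration.integral_cong[OF refl])
      fix \<omega> assume "\<omega> \<in> space M"
      then have "X \<omega> \<in> {-1, 1}" by (rule Xb)
      then have "(X \<omega>)\<^sup>2 = 1" by auto
      then show "(X \<omega> - c \<omega>)\<^sup>2 = 1 - 2 * (c \<omega> * X \<omega>) + (c \<omega>)\<^sup>2"
        by (simp add: power2_diff algebra_simps)
    qed
    also have "\<dots> = 1 - 2 * (\<integral>\<omega>. c \<omega> * X \<omega> \<partial>M) + (\<integral>\<omega>. (c \<omega>)\<^sup>2 \<partial>M)"
      using cXi ci2 by (simp add: M.prob_space)
    also have "\<dots> = 1 - (\<integral>\<omega>. (c \<omega>)\<^sup>2 \<partial>M)" using cc by (simp add: power2_eq_square)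
    finally show ?thesis .
  qed
  have "(\<integral>\<omega>. \<bar>c \<omega>\<bar> \<partial>M)\<^sup>2 \<le> (\<integral>\<omega>. \<bar>c \<omega>\<bar>\<^sup>2 \<partial>M)"
    by (rule M.sq_int_le[OF cai]) (use ci2 in simp)
  then have "(\<integral>\<omega>. \<bar>c \<omega>\<bar> \<partial>M)\<^sup>2 \<le> 1 - mmse M F X" using mm by simp
  then show "(\<integral>\<omega>. \<bar>real_cond_exp M (gen_sigma M U N) X \<omega>\<bar> \<partial>M) \<le> sqrt (1 - mmse M (gen_sigma M U N) X)"
    unfolding c_def F_def by (rule real_le_rsqrt)
qed

lemma pt_ineq:
  fixes a b c \<beta> :: real
  assumes "0 \<le> a" "0 \<le> b" "\<bar>c\<bar> \<le> 1" "2 * \<beta> \<le> a + b"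
  shows "\<beta> * (1 - \<bar>c\<bar>) \<le> (a + b) / 2 + (a - b) / 2 * c"
proof -
  have "\<beta> * (1 - \<bar>c\<bar>) \<le> (a + b) / 2 * (1 - \<bar>c\<bar>)"
    using assms by (intro mult_right_mono) auto
  also have "\<dots> \<le> (a + b) / 2 + (a - b) / 2 * c"
  proof (cases "c \<ge> 0")
    case True
    have "0 \<le> c * a" using True assms by simp
    moreover have "(a + b) / 2 + (a - b) / 2 * c - (a + b) / 2 * (1 - \<bar>c\<bar>) = c * a"
      using True by (simp add: field_simps)
    ultimately show ?thesis by linarith
  next
    case False
    have "0 \<le> (- c) * b" using False assms by (intro mult_nonneg_nonneg) auto
    moreover have "(a + b) / 2 + (a - b) / 2 * c - (a + b) / 2 * (1 - \<bar>c\<bar>) = (- c) * b"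
      using False by (simp add: field_simps)
    ultimately show ?thesis by linarith
  qed
  finally show ?thesis .
qed

lemma BER_YU_lower:
  fixes M :: "'a measure" and X :: "'a \<Rightarrow> real" and Y :: "'a \<Rightarrow> ereal"
    and U :: "'a \<Rightarrow> 'b" and N :: "'b measure" and W :: "real \<Rightarrow> ereal measure"
  assumes P: "prob_space M"
    and Xm[measurable]: "X \<in> borel_measurable M"
    and Xb: "\<And>\<omega>. \<omega> \<in> space M \<Longrightarrow> X \<omega> \<in> {-1, 1}"
    and Ym[measurable]: "Y \<in> borel_measurable M"
    and Um[measurable]: "U \<in> measurable M N"
    and bms: "bms_channel W"
    and channel: "\<And>x B. x \<in> {-1, 1} \<Longrightarrow> B \<in> sets borel \<Longrightarrow>
        measure M {\<omega> \<in> space M. X \<omega> = x \<and> Y \<omega> \<in> B}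
          = measure M {\<omega> \<in> space M. X \<omega> = x} * measure (W x) B"
    and markov: "\<And>x A B. x \<in> {-1, 1} \<Longrightarrow> A \<in> sets N \<Longrightarrow> B \<in> sets borel \<Longrightarrow>
        measure M {\<omega> \<in> space M. X \<omega> = x \<and> U \<omega> \<in> A \<and> Y \<omega> \<in> B}
          * measure M {\<omega> \<in> space M. X \<omega> = x}
        = measure M {\<omega> \<in> space M. X \<omega> = x \<and> U \<omega> \<in> A}
          * measure M {\<omega> \<in> space M. X \<omega> = x \<and> Y \<omega> \<in> B}"
    and blow: "\<And>D. D \<in> sets borel \<Longrightarrow> 2 * \<beta> \<le> measure (W 1) (UNIV - D) + measure (W (-1)) D"
    and b0: "0 \<le> \<beta>"
  shows "\<beta> - \<beta> * (\<integral>\<omega>. \<bar>real_cond_exp M (gen_sigma M U N) X \<omega>\<bar> \<partial>M)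
    \<le> BER M (gen_sigma M (\<lambda>\<omega>. (Y \<omega>, U \<omega>)) (borel \<Otimes>\<^sub>M N)) X"
proof -
  interpret M: prob_space M by (rule P)
  note bf = bms_facts[OF bms]
  have Wx: "prob_space (W x)" "sets (W x) = sets borel" if "x \<in> {-1, 1}" for x
    using bf that by auto
  define F where "F = gen_sigma M (\<lambda>\<omega>. (Y \<omega>, U \<omega>)) (borel \<Otimes>\<^sub>M N)"
  define FU where "FU = gen_sigma M U N"
  have YUm[measurable]: "(\<lambda>\<omega>. (Y \<omega>, U \<omega>)) \<in> measurable M (borel \<Otimes>\<^sub>M N)" by measurable
  interpret F: sigma_finite_subalgebra M F unfolding F_def by (rule gen_sigma_subalg[OF P YUm])
  interpret FU: sigma_finite_subalgebra M FU unfolding FU_def by (rule gen_sigma_subalg[OF P Um])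
  define c' where "c' = real_cond_exp M F X"
  define c where "c = real_cond_exp M FU X"
  have c'F[measurable]: "c' \<in> borel_measurable F" unfolding c'_def by simp
  have cFU[measurable]: "c \<in> borel_measurable FU" unfolding c_def by simp
  have cM[measurable]: "c \<in> borel_measurable M" unfolding c_def by simp
  have spF: "space F = space M" unfolding F_def gen_sigma_def by simp
  have "{\<omega> \<in> space F. 0 \<le> c' \<omega>} \<in> sets F" by measurable
  moreover have "sets F = {(\<lambda>\<omega>. (Y \<omega>, U \<omega>)) -` A \<inter> space M | A. A \<in> sets (borel \<Otimes>\<^sub>M N)}"
    unfolding F_def gen_sigma_def by (rule sets_vimage_algebra2) (use measurable_space[OF YUm] in auto)
  ultimately obtain S where S: "S \<in> sets (borel \<Otimes>\<^sub>M N)"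
    and GS: "{\<omega> \<in> space M. 0 \<le> c' \<omega>} = (\<lambda>\<omega>. (Y \<omega>, U \<omega>)) -` S \<inter> space M"
    using spF by auto
  have cS: "0 \<le> c' \<omega> \<longleftrightarrow> (Y \<omega>, U \<omega>) \<in> S" if "\<omega> \<in> space M" for \<omega>
    using GS that by blast
  define Sc where "Sc = space (borel \<Otimes>\<^sub>M N) - S"
  have Sc: "Sc \<in> sets (borel \<Otimes>\<^sub>M N)" unfolding Sc_def using S by auto
  have YUsp: "(Y \<omega>, U \<omega>) \<in> space (borel \<Otimes>\<^sub>M N)" if "\<omega> \<in> space M" for \<omega>
    using measurable_space[OF YUm that] .
  have kf: "measure M {\<omega> \<in> space M. X \<omega> = x \<and> (Y \<omega>, U \<omega>) \<in> T}
      = (\<integral>\<omega>. indicator {\<omega> \<in> space M. X \<omega> = x} \<omega> * measure (W x) {y. (y, U \<omega>) \<in> T} \<partial>M)"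
    if x: "x \<in> {-1, 1}" and T: "T \<in> sets (borel \<Otimes>\<^sub>M N)" for x T
  proof -
    interpret Wx: prob_space "W x" by (rule Wx(1)[OF x])
    have gF: "(\<lambda>\<omega>. measure (W x) {y. (y, U \<omega>) \<in> T}) \<in> borel_measurable FU"
      unfolding FU_def by (rule slice_meas[OF Wx[OF x] Um T])
    have gM[measurable]: "(\<lambda>\<omega>. measure (W x) {y. (y, U \<omega>) \<in> T}) \<in> borel_measurable M"
      by (rule measurable_from_subalg[OF FU.subalg gF])
    have "measure M {\<omega> \<in> space M. X \<omega> = x \<and> (Y \<omega>, U \<omega>) \<in> T}
        = enn2real (emeasure M {\<omega> \<in> space M. X \<omega> = x \<and> (Y \<omega>, U \<omega>) \<in> T})" by (simp add: measure_def)
    also have "\<dots> = enn2real (\<integral>\<^sup>+\<omega>. indicator {\<omega> \<in> space M. X \<omega> = x} \<omega> * emeasure (W x) {y. (y, U \<omega>) \<in> T} \<partial>M)"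
      by (subst kernel_formula[OF P Xm Ym Um Wx[OF x] channel[OF x] markov[OF x] T]) auto
    also have "\<dots> = (\<integral>\<omega>. indicator {\<omega> \<in> space M. X \<omega> = x} \<omega> * measure (W x) {y. (y, U \<omega>) \<in> T} \<partial>M)"
      by (rule enn2real_nn_integral_eq_integral)
         (auto simp: Wx.emeasure_eq_measure indicator_def)
    finally show ?thesis .
  qed
  have W1p: "prob_space (W 1)" "sets (W 1) = sets borel" using bf by auto
  have Wmp: "prob_space (W (-1))" "sets (W (-1)) = sets borel" using bf by auto
  define a where "a \<omega> = measure (W 1) {y. (y, U \<omega>) \<in> Sc}" for \<omega>
  define b where "b \<omega> = measure (W (-1)) {y. (y, U \<omega>) \<in> S}" for \<omega>
  have aF: "a \<in> borel_measurable FU" unfolding a_def FU_def by (rule slice_meas[OF W1p Um Sc])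
  have bF: "b \<in> borel_measurable FU" unfolding b_def FU_def by (rule slice_meas[OF Wmp Um S])
  have aM[measurable]: "a \<in> borel_measurable M" by (rule measurable_from_subalg[OF FU.subalg aF])
  have bM[measurable]: "b \<in> borel_measurable M" by (rule measurable_from_subalg[OF FU.subalg bF])
  have a01: "0 \<le> a \<omega>" "a \<omega> \<le> 1" for \<omega>
    unfolding a_def using prob_space.prob_le_1[OF W1p(1)] by auto
  have b01: "0 \<le> b \<omega>" "b \<omega> \<le> 1" for \<omega>
    unfolding b_def using prob_space.prob_le_1[OF Wmp(1)] by auto
  have ab: "2 * \<beta> \<le> a \<omega> + b \<omega>" if \<omega>: "\<omega> \<in> space M" for \<omega>
  proof -
    have Uo: "U \<omega> \<in> space N" using measurable_space[OF Um \<omega>] .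
    define D where "D = {y. (y, U \<omega>) \<in> S}"
    have pm: "(\<lambda>y. (y, U \<omega>)) \<in> measurable (borel :: ereal measure) (borel \<Otimes>\<^sub>M N)"
      using Uo by (intro measurable_Pair) auto
    have D: "D \<in> sets borel" using measurable_sets[OF pm S] unfolding D_def by (simp add: vimage_def)
    have "{y. (y, U \<omega>) \<in> Sc} = UNIV - D" unfolding D_def Sc_def using Uo by (auto simp: space_pair_measure)
    then show ?thesis using blow[OF D] unfolding a_def b_def D_def by simp
  qed
  have cb: "AE \<omega> in M. \<bar>c \<omega>\<bar> \<le> 1" unfolding c_def FU_def by (rule mmse_bound(2)[OF P Xm Xb Um])
  have bnd: "integrable M f" if "f \<in> borel_measurable M" "AE \<omega> in M. \<bar>f \<omega>\<bar> \<le> B" for f and B :: real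
    by (rule M.integrable_const_bound[where B = B]) (use that in auto)
  have Xb': "\<bar>X \<omega>\<bar> \<le> 1" if "\<omega> \<in> space M" for \<omega> using Xb[OF that] by auto
  have E1[measurable]: "{\<omega> \<in> space M. X \<omega> = 1} \<in> sets M" by measurable
  have E2[measurable]: "{\<omega> \<in> space M. X \<omega> = -1} \<in> sets M" by measurable
  have i1: "integrable M (\<lambda>\<omega>. indicator {\<omega> \<in> space M. X \<omega> = 1} \<omega> * a \<omega>)"
    by (rule bnd[of _ 1], measurable) (auto intro!: AE_I2 simp: indicator_def a01 abs_le_iff)
  have i2: "integrable M (\<lambda>\<omega>. indicator {\<omega> \<in> space M. X \<omega> = -1} \<omega> * b \<omega>)"
    by (rule bnd[of _ 1], measurable) (auto intro!: AE_I2 simp: indicator_def b01 abs_le_iff)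
  have i3: "integrable M (\<lambda>\<omega>. (a \<omega> + b \<omega>) / 2)"
  proof (rule bnd[of _ 1])
    show "(\<lambda>\<omega>. (a \<omega> + b \<omega>) / 2) \<in> borel_measurable M" by measurable
    have "\<bar>(a \<omega> + b \<omega>) / 2\<bar> \<le> 1" for \<omega> using a01[of \<omega>] b01[of \<omega>] by auto
    then show "AE \<omega> in M. \<bar>(a \<omega> + b \<omega>) / 2\<bar> \<le> 1" by simp
  qed
  have i4: "integrable M (\<lambda>\<omega>. (a \<omega> - b \<omega>) / 2 * X \<omega>)"
  proof (rule bnd[of _ 1])
    show "AE \<omega> in M. \<bar>(a \<omega> - b \<omega>) / 2 * X \<omega>\<bar> \<le> 1"
    proof (rule AE_I2)
      fix \<omega> assume "\<omega> \<in> space M"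
      then have "\<bar>(a \<omega> - b \<omega>) / 2\<bar> * \<bar>X \<omega>\<bar> \<le> 1"
        using Xb' a01[of \<omega>] b01[of \<omega>] by (intro mult_le_one) auto
      then show "\<bar>(a \<omega> - b \<omega>) / 2 * X \<omega>\<bar> \<le> 1" by (simp add: abs_mult)
    qed
  qed simp
  have abF: "(\<lambda>\<omega>. (a \<omega> - b \<omega>) / 2) \<in> borel_measurable FU"
  proof -
    note [measurable] = aF bF
    show ?thesis by measurable
  qed
  note ce = FU.real_cond_exp_intg[OF i4 abF Xm, folded c_def]
  have i5: "integrable M (\<lambda>\<omega>. (a \<omega> - b \<omega>) / 2 * c \<omega>)" by (rule ce(1))
  have i6: "integrable M (\<lambda>\<omega>. \<beta> * (1 - \<bar>c \<omega>\<bar>))"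
  proof (rule bnd[of _ "\<beta> * 2"])
    show "(\<lambda>\<omega>. \<beta> * (1 - \<bar>c \<omega>\<bar>)) \<in> borel_measurable M" by measurable
    show "AE \<omega> in M. \<bar>\<beta> * (1 - \<bar>c \<omega>\<bar>)\<bar> \<le> \<beta> * 2"
    proof (rule AE_mp[OF cb], rule AE_I2, rule impI)
      fix \<omega> assume elim: "\<bar>c \<omega>\<bar> \<le> 1"
      have "\<bar>1 - \<bar>c \<omega>\<bar>\<bar> \<le> 2" using elim by auto
      then have "\<beta> * \<bar>1 - \<bar>c \<omega>\<bar>\<bar> \<le> \<beta> * 2" using b0 by (intro mult_left_mono)
      then show "\<bar>\<beta> * (1 - \<bar>c \<omega>\<bar>)\<bar> \<le> \<beta> * 2" using b0 by (simp add: abs_mult)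
    qed
  qed
  have "BER M F X = measure M ({\<omega> \<in> space M. X \<omega> = 1 \<and> (Y \<omega>, U \<omega>) \<in> Sc}
      \<union> {\<omega> \<in> space M. X \<omega> = -1 \<and> (Y \<omega>, U \<omega>) \<in> S})"
    unfolding BER_def map_decision_def c'_def[symmetric]
  proof (rule arg_cong[where f = "measure M"])
    show "{\<omega> \<in> space M. X \<omega> \<noteq> (if 0 \<le> c' \<omega> then 1 else - 1)}
      = {\<omega> \<in> space M. X \<omega> = 1 \<and> (Y \<omega>, U \<omega>) \<in> Sc} \<union> {\<omega> \<in> space M. X \<omega> = -1 \<and> (Y \<omega>, U \<omega>) \<in> S}"
    proof (intro set_eqI iffI)
      fix \<omega> assume "\<omega> \<in> {\<omega> \<in> space M. X \<omega> \<noteq> (if 0 \<le> c' \<omega> then 1 else - 1)}"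
      then have o: "\<omega> \<in> space M" "X \<omega> \<noteq> (if 0 \<le> c' \<omega> then 1 else - 1)" by auto
      then show "\<omega> \<in> {\<omega> \<in> space M. X \<omega> = 1 \<and> (Y \<omega>, U \<omega>) \<in> Sc} \<union> {\<omega> \<in> space M. X \<omega> = -1 \<and> (Y \<omega>, U \<omega>) \<in> S}"
        using Xb[OF o(1)] cS[OF o(1)] YUsp[OF o(1)] unfolding Sc_def by (auto split: if_splits)
    next
      fix \<omega> assume "\<omega> \<in> {\<omega> \<in> space M. X \<omega> = 1 \<and> (Y \<omega>, U \<omega>) \<in> Sc} \<union> {\<omega> \<in> space M. X \<omega> = -1 \<and> (Y \<omega>, U \<omega>) \<in> S}"
      then have o: "\<omega> \<in> space M" by auto
      show "\<omega> \<in> {\<omega> \<in> space M. X \<omega> \<noteq> (if 0 \<le> c' \<omega> then 1 else - 1)}"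
        using \<open>\<omega> \<in> _ \<union> _\<close> cS[OF o] unfolding Sc_def by auto
    qed
  qed
  also have "\<dots> = measure M {\<omega> \<in> space M. X \<omega> = 1 \<and> (Y \<omega>, U \<omega>) \<in> Sc}
      + measure M {\<omega> \<in> space M. X \<omega> = -1 \<and> (Y \<omega>, U \<omega>) \<in> S}"
    using S Sc by (subst M.finite_measure_Union) auto
  also have "\<dots> = (\<integral>\<omega>. indicator {\<omega> \<in> space M. X \<omega> = 1} \<omega> * a \<omega> \<partial>M)
      + (\<integral>\<omega>. indicator {\<omega> \<in> space M. X \<omega> = -1} \<omega> * b \<omega> \<partial>M)"
    unfolding a_def b_def by (simp add: kf S Sc)
  also have "\<dots> = (\<integral>\<omega>. indicator {\<omega> \<in> space M. X \<omega> = 1} \<omega> * a \<omega>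
      + indicator {\<omega> \<in> space M. X \<omega> = -1} \<omega> * b \<omega> \<partial>M)"
    using i1 i2 by simp
  also have "\<dots> = (\<integral>\<omega>. (a \<omega> + b \<omega>) / 2 + (a \<omega> - b \<omega>) / 2 * X \<omega> \<partial>M)"
  proof (rule Bochner_Integration.integral_cong[OF refl])
    fix \<omega> assume o: "\<omega> \<in> space M"
    show "indicator {\<omega> \<in> space M. X \<omega> = 1} \<omega> * a \<omega> + indicator {\<omega> \<in> space M. X \<omega> = -1} \<omega> * b \<omega>
        = (a \<omega> + b \<omega>) / 2 + (a \<omega> - b \<omega>) / 2 * X \<omega>"
      using Xb[OF o] o by (auto simp: indicator_def field_simps)
  qed
  also have "\<dots> = (\<integral>\<omega>. (a \<omega> + b \<omega>) / 2 \<partial>M) + (\<integral>\<omega>. (a \<omega> - b \<omega>) / 2 * X \<omega> \<partial>M)"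
    using i3 i4 by simp
  also have "(\<integral>\<omega>. (a \<omega> - b \<omega>) / 2 * X \<omega> \<partial>M) = (\<integral>\<omega>. (a \<omega> - b \<omega>) / 2 * c \<omega> \<partial>M)"
    by (rule ce(2)[symmetric])
  also have "(\<integral>\<omega>. (a \<omega> + b \<omega>) / 2 \<partial>M) + (\<integral>\<omega>. (a \<omega> - b \<omega>) / 2 * c \<omega> \<partial>M)
      = (\<integral>\<omega>. (a \<omega> + b \<omega>) / 2 + (a \<omega> - b \<omega>) / 2 * c \<omega> \<partial>M)"
    using i3 i5 by simp
  finally have BERe: "BER M F X = (\<integral>\<omega>. (a \<omega> + b \<omega>) / 2 + (a \<omega> - b \<omega>) / 2 * c \<omega> \<partial>M)" .
  have "(\<integral>\<omega>. \<beta> * (1 - \<bar>c \<omega>\<bar>) \<partial>M) \<le> (\<integral>\<omega>. (a \<omega> + b \<omega>) / 2 + (a \<omega> - b \<omega>) / 2 * c \<omega> \<partial>M)"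
  proof (rule integral_mono_AE[OF i6])
    show "integrable M (\<lambda>\<omega>. (a \<omega> + b \<omega>) / 2 + (a \<omega> - b \<omega>) / 2 * c \<omega>)" using i3 i5 by simp
    show "AE \<omega> in M. \<beta> * (1 - \<bar>c \<omega>\<bar>) \<le> (a \<omega> + b \<omega>) / 2 + (a \<omega> - b \<omega>) / 2 * c \<omega>"
    proof (rule AE_mp[OF cb], rule AE_I2, rule impI)
      fix \<omega> assume "\<omega> \<in> space M" "\<bar>c \<omega>\<bar> \<le> 1"
      then show "\<beta> * (1 - \<bar>c \<omega>\<bar>) \<le> (a \<omega> + b \<omega>) / 2 + (a \<omega> - b \<omega>) / 2 * c \<omega>"
        by (intro pt_ineq) (use a01 b01 ab in auto)
    qed
  qed
  moreover have "(\<integral>\<omega>. \<beta> * (1 - \<bar>c \<omega>\<bar>) \<partial>M) = \<beta> - \<beta> * (\<integral>\<omega>. \<bar>c \<omega>\<bar> \<partial>M)"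
  proof -
    have ic: "integrable M (\<lambda>\<omega>. \<bar>c \<omega>\<bar>)" by (rule bnd[of _ 1], measurable) (use cb in auto)
    then show ?thesis by (simp add: right_diff_distrib M.prob_space)
  qed
  ultimately show ?thesis using BERe unfolding F_def c_def FU_def by simp
qed

theorem lemma22:
  fixes M :: "'a measure" and X :: "'a \<Rightarrow> real" and Y :: "'a \<Rightarrow> ereal"
    and U :: "'a \<Rightarrow> 'b" and N :: "'b measure" and W :: "real \<Rightarrow> ereal measure"
  assumes "prob_space M"
    and X_meas: "X \<in> borel_measurable M"
    and X_bin: "\<And>\<omega>. \<omega> \<in> space M \<Longrightarrow> X \<omega> \<in> {-1, 1}"
    and Y_meas: "Y \<in> borel_measurable M"
    and U_meas: "U \<in> measurable M N"
    and bms: "bms_channel W"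
    and channel: "\<And>x B. x \<in> {-1, 1} \<Longrightarrow> B \<in> sets borel \<Longrightarrow>
        measure M {\<omega> \<in> space M. X \<omega> = x \<and> Y \<omega> \<in> B}
          = measure M {\<omega> \<in> space M. X \<omega> = x} * measure (W x) B"
    and markov: "\<And>x A B. x \<in> {-1, 1} \<Longrightarrow> A \<in> sets N \<Longrightarrow> B \<in> sets borel \<Longrightarrow>
        measure M {\<omega> \<in> space M. X \<omega> = x \<and> U \<omega> \<in> A \<and> Y \<omega> \<in> B}
          * measure M {\<omega> \<in> space M. X \<omega> = x}
        = measure M {\<omega> \<in> space M. X \<omega> = x \<and> U \<omega> \<in> A}
          * measure M {\<omega> \<in> space M. X \<omega> = x \<and> Y \<omega> \<in> B}"
  shows "BER M (gen_sigma M (\<lambda>\<omega>. (Y \<omega>, U \<omega>)) (borel \<Otimes>\<^sub>M N)) X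
           \<ge> BER M (gen_sigma M Y borel) X
             - sqrt (ln 2 * (1 - bms_capacity W) * (1 - mmse M (gen_sigma M U N) X) / 2)"
proof -
  obtain \<beta> where b0: "0 \<le> \<beta>" and bC: "\<beta> \<le> sqrt (ln 2 * (1 - bms_capacity W) / 2)"
    and blow: "\<And>D. D \<in> sets borel \<Longrightarrow> 2 * \<beta> \<le> measure (W 1) (UNIV - D) + measure (W (-1)) D"
    and bD0: "\<exists>D0 \<in> sets borel. measure (W 1) D0 + measure (W (-1)) (UNIV - D0) = 2 * \<beta>"
    using chan_final[OF bms] by blast
  from bD0 obtain D0 where D0: "D0 \<in> sets borel" and D0eq: "measure (W 1) D0 + measure (W (-1)) (UNIV - D0) = 2 * \<beta>"
    by blast
  have up: "BER M (gen_sigma M Y borel) X \<le> \<beta>"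
    by (rule BER_Y_upper[OF assms(1) X_meas X_bin Y_meas bms channel D0 D0eq])
  have low: "\<beta> - \<beta> * (\<integral>\<omega>. \<bar>real_cond_exp M (gen_sigma M U N) X \<omega>\<bar> \<partial>M)
      \<le> BER M (gen_sigma M (\<lambda>\<omega>. (Y \<omega>, U \<omega>)) (borel \<Otimes>\<^sub>M N)) X"
    by (rule BER_YU_lower[OF assms(1) X_meas X_bin Y_meas U_meas bms channel markov blow b0])
  have ms: "(\<integral>\<omega>. \<bar>real_cond_exp M (gen_sigma M U N) X \<omega>\<bar> \<partial>M) \<le> sqrt (1 - mmse M (gen_sigma M U N) X)"
    by (rule mmse_bound(1)[OF assms(1) X_meas X_bin U_meas])
  define s where "s = sqrt (1 - mmse M (gen_sigma M U N) X)"
  define k where "k = sqrt (ln 2 * (1 - bms_capacity W) / 2)"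
  have "\<beta> * (\<integral>\<omega>. \<bar>real_cond_exp M (gen_sigma M U N) X \<omega>\<bar> \<partial>M) \<le> \<beta> * s"
    using ms b0 unfolding s_def by (intro mult_left_mono)
  also have "\<dots> \<le> k * s"
  proof (rule mult_right_mono)
    show "\<beta> \<le> k" using bC unfolding k_def .
    have "0 \<le> (\<integral>\<omega>. \<bar>real_cond_exp M (gen_sigma M U N) X \<omega>\<bar> \<partial>M)" by simp
    then show "0 \<le> s" using ms unfolding s_def by linarith
  qed
  also have "k * s = sqrt (ln 2 * (1 - bms_capacity W) * (1 - mmse M (gen_sigma M U N) X) / 2)"
    unfolding k_def s_def by (simp add: real_sqrt_mult[symmetric])
  finally show ?thesis using up low by linarith
qed

end
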